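(* Let $X=\ell_p$ for some $1\le p<\infty$, or $X=c_0$, considered as a Banach algebra under coordinatewise multiplication, and let $\lambda\in\mathbb C$ with $|\lambda|>1$. Then $\lambda B$ admits an algebra of $\mathcal A_{\underline{\log}}$-hypercyclic vectors, except zero. In particular, it admits an algebra of upper frequently hypercyclic vectors, except zero.
   Context: $\lambda B(x(1),x(2),x(3),\ldots)=(\lambda x(2),\lambda x(3),\ldots)$. The lower logarithmic density of $A\subset\mathbb N_0$ is $\liminf_{N\to\infty}\frac{\sum_{1\le n\le N,n\in A}1/n}{\sum_{1\le n\le N}1/n}$, and $\mathcal A_{\underline{\log}}$ is the family of subsets of $\mathbb N_0$ of positive lower logarithmic density. A vector $x$ is $\mathcal A$-hypercyclic for $T$ if for every non-empty open $U\subset X$, $\{n\ge0:T^nx\in U\}\in\mathcal A$; upper frequently hypercyclic means $\mathcal A$-hypercyclic for $\mathcal A$ the family of sets of positive upper density $\limsup_{N\to\infty}\frac{\mathrm{card}(A\cap[0,N])}{N+1}$. An algebra of such vectors, except zero, is a subalgebra $\ne\{0\}$ of $X$ all of whose non-zero elements are such vectors. *)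

theory Defs
  imports "HOL-Analysis.Analysis"
begin

text \<open>Sequences x(1), x(2), ... are modelled as functions nat => complex indexed from 0.
  The backward shift B sends x to (x(1), x(2), ...), i.e. (\<lambda>n. x (Suc n)).\<close>

definition lp_space :: "real \<Rightarrow> (nat \<Rightarrow> complex) set" where
  "lp_space p = {x. summable (\<lambda>n. norm (x n) powr p)}"

definition lp_norm :: "real \<Rightarrow> (nat \<Rightarrow> complex) \<Rightarrow> real" where
  "lp_norm p x = (\<Sum>n. norm (x n) powr p) powr (1 / p)"

definition c0_space :: "(nat \<Rightarrow> complex) set" where
  "c0_space = {x. x \<longlonglongrightarrow> 0}"

definition c0_norm :: "(nat \<Rightarrow> complex) \<Rightarrow> real" where
  "c0_norm x = (SUP n. norm (x n))"

definition backward_shift :: "(nat \<Rightarrow> complex) \<Rightarrow> (nat \<Rightarrow> complex)" where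
  "backward_shift x = (\<lambda>n. x (Suc n))"

definition open_in_space :: "(nat \<Rightarrow> complex) set \<Rightarrow> ((nat \<Rightarrow> complex) \<Rightarrow> real)
    \<Rightarrow> (nat \<Rightarrow> complex) set \<Rightarrow> bool" where
  "open_in_space S N U \<longleftrightarrow> U \<subseteq> S \<and>
     (\<forall>x\<in>U. \<exists>e>0. \<forall>y\<in>S. N (\<lambda>n. y n - x n) < e \<longrightarrow> y \<in> U)"

definition lower_log_density :: "nat set \<Rightarrow> ereal" where
  "lower_log_density A = liminf (\<lambda>N. ereal
      ((\<Sum>n\<in>{n\<in>A. 1 \<le> n \<and> n \<le> N}. 1 / real n) / (\<Sum>n\<in>{1..N}. 1 / real n)))"

definition upper_density :: "nat set \<Rightarrow> ereal" where
  "upper_density A = limsup (\<lambda>N. ereal (real (card (A \<inter> {0..N})) / real (N + 1)))"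

definition A_log :: "nat set set" where
  "A_log = {A. lower_log_density A > 0}"

definition A_ud :: "nat set set" where
  "A_ud = {A. upper_density A > 0}"

definition A_hypercyclic :: "nat set set \<Rightarrow> (nat \<Rightarrow> complex) set \<Rightarrow> ((nat \<Rightarrow> complex) \<Rightarrow> real)
    \<Rightarrow> ((nat \<Rightarrow> complex) \<Rightarrow> (nat \<Rightarrow> complex)) \<Rightarrow> (nat \<Rightarrow> complex) \<Rightarrow> bool" where
  "A_hypercyclic \<A> S N T x \<longleftrightarrow> x \<in> S \<and>
     (\<forall>U. open_in_space S N U \<and> U \<noteq> {} \<longrightarrow> {n. (T ^^ n) x \<in> U} \<in> \<A>)"

definition is_subalgebra :: "(nat \<Rightarrow> complex) set \<Rightarrow> (nat \<Rightarrow> complex) set \<Rightarrow> bool" where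
  "is_subalgebra S A \<longleftrightarrow> A \<subseteq> S \<and> (\<lambda>n. 0) \<in> A \<and>
     (\<forall>x\<in>A. \<forall>y\<in>A. (\<lambda>n. x n + y n) \<in> A \<and> (\<lambda>n. x n * y n) \<in> A) \<and>
     (\<forall>c::complex. \<forall>x\<in>A. (\<lambda>n. c * x n) \<in> A)"

definition admits_algebra :: "nat set set \<Rightarrow> (nat \<Rightarrow> complex) set \<Rightarrow> ((nat \<Rightarrow> complex) \<Rightarrow> real)
    \<Rightarrow> ((nat \<Rightarrow> complex) \<Rightarrow> (nat \<Rightarrow> complex)) \<Rightarrow> bool" where
  "admits_algebra \<A> S N T \<longleftrightarrow>
     (\<exists>A. is_subalgebra S A \<and> A \<noteq> {\<lambda>n. 0} \<and> (\<forall>x\<in>A - {\<lambda>n. 0}. A_hypercyclic \<A> S N T x))"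

end

theory Submission
  imports Defs "HOL-Library.Countable" "HOL-Computational_Algebra.Polynomial"
begin

lemma ev_real_nat:
  assumes "eventually P (at_top :: real filter)"
  shows "\<exists>S::nat. \<forall>s\<ge>S. P (real s)"
proof -
  have "eventually (\<lambda>s::nat. P (real s)) sequentially"
    by (rule eventually_compose_filterlim[OF assms filterlim_real_sequentially])
  thus ?thesis by (simp add: eventually_sequentially)
qed

lemma lin_exp_bound:
  assumes "(r::real) > 1"
  shows "\<exists>S::nat. \<forall>s\<ge>S. A * real s + B \<le> r ^ s"
proof -
  have t1: "(\<lambda>n. real n / r ^ n) \<longlonglongrightarrow> 0" using lim_n_over_pown[of r] assms by simp
  have t2: "(\<lambda>n. (inverse r) ^ n) \<longlonglongrightarrow> 0" using assms by (intro LIMSEQ_power_zero) (auto simp: inverse_less_1_iff)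
  have "(\<lambda>n. A * (real n / r ^ n) + B * (inverse r) ^ n) \<longlonglongrightarrow> A * 0 + B * 0"
    by (intro tendsto_intros t1 t2)
  hence "eventually (\<lambda>n. A * (real n / r ^ n) + B * (inverse r) ^ n < 1) sequentially"
    by (intro order_tendstoD) auto
  then obtain S where S: "\<forall>n\<ge>S. A * (real n / r ^ n) + B * (inverse r) ^ n < 1"
    by (auto simp: eventually_sequentially)
  have "A * real n + B \<le> r ^ n" if "n \<ge> S" for n
  proof -
    have rp: "r ^ n > 0" using assms by simp
    have "A * (real n / r ^ n) + B * (inverse r) ^ n = (A * real n + B) / r ^ n"
      using rp by (simp add: field_simps power_inverse add_divide_distrib)
    hence "(A * real n + B) / r ^ n < 1" using S that by metis
    thus ?thesis using rp by (simp add: field_simps)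
  qed
  thus ?thesis by blast
qed

lemma poly_exp_bound:
  assumes "(r::real) > 1" "A \<ge> 0" "B \<ge> 0"
  shows "\<exists>S::nat. \<forall>s\<ge>S. (A * real s + B)^2 \<le> r ^ s"
proof -
  have "sqrt r > 1" using assms by simp
  then obtain S::nat where S: "\<forall>s\<ge>S. A * real s + B \<le> sqrt r ^ s" using lin_exp_bound by blast
  have "(A * real s + B)^2 \<le> r ^ s" if "s \<ge> S" for s
  proof -
    have "(A * real s + B)^2 \<le> (sqrt r ^ s)^2"
      using S that assms by (intro power_mono) auto
    also have "\<dots> = (sqrt r ^ 2) ^ s" by (simp add: power_mult[symmetric] mult.commute)
    also have "\<dots> = r ^ s" using assms by simp
    finally show ?thesis .
  qed
  thus ?thesis by blast
qed

lemma exp_large: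
  assumes "(r::real) > 1"
  shows "\<exists>S::nat. \<forall>s\<ge>S. W \<le> r ^ s"
proof -
  obtain n where "W < r ^ n" using real_arch_pow[OF assms] by blast
  hence "\<forall>s\<ge>n. W \<le> r ^ s" using assms
    by (smt (verit, best) power_increasing)
  thus ?thesis by blast
qed

fun nu :: "nat \<Rightarrow> nat" where "nu n = (if n = 0 \<or> odd n then 0 else Suc (nu (n div 2)))"
declare nu.simps[simp del]

lemma nu_odd: "odd n \<Longrightarrow> nu n = 0" by (simp add: nu.simps)
lemma nu_double: "n > 0 \<Longrightarrow> nu (2 * n) = Suc (nu n)" by (subst nu.simps) simp
lemma nu_pow_odd: "odd m \<Longrightarrow> nu (2^a * m) = a"
  by (induction a) (auto simp: nu_odd nu_double mult.assoc odd_pos)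

lemma nu_sum_double: "(\<Sum>i=1..2*m. nu i) = m + (\<Sum>i=1..m. nu i)"
proof (induction m)
  case 0 then show ?case by simp
next
  case (Suc m)
  have e: "2 * Suc m = Suc (Suc (2*m))" by simp
  have "(\<Sum>i=1..2*Suc m. nu i) = (\<Sum>i=1..2*m. nu i) + nu (Suc (2*m)) + nu (Suc (Suc (2*m)))"
    by (simp add: e)
  also have "nu (Suc (2*m)) = 0" by (simp add: nu_odd)
  also have "nu (Suc (Suc (2*m))) = Suc (nu (Suc m))"
    using nu_double[of "Suc m"] by simp
  finally show ?case using Suc by simp
qed

lemma nu_sum_le: "(\<Sum>i=1..n. nu i) \<le> n"
proof (induction n rule: less_induct)
  case (less n)
  show ?case
  proof (cases "n = 0")
    case True then show ?thesis by simp
  next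
    case False
    obtain m where m: "n = 2*m \<or> n = Suc (2*m)" by (metis oddE evenE Suc_eq_plus1)
    have mlt: "m < n" using m False by auto
    have h: "(\<Sum>i=1..2*m. nu i) \<le> 2*m" using nu_sum_double[of m] less.IH[OF mlt] by simp
    show ?thesis
    proof (cases "n = 2*m")
      case True then show ?thesis using h by simp
    next
      case False
      hence n: "n = Suc (2*m)" using m by simp
      have "(\<Sum>i=1..n. nu i) = (\<Sum>i=1..2*m. nu i) + nu (Suc (2*m))" by (simp add: n)
      thus ?thesis using h by (simp add: nu_odd n)
    qed
  qed
qed

definition croot :: "nat \<Rightarrow> complex \<Rightarrow> complex" where
  "croot d z = (if z = 0 then 0 else exp (Ln z / of_nat d))"

lemma croot_power: "d > 0 \<Longrightarrow> croot d z ^ d = z"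
proof -
  assume d: "d > 0"
  show ?thesis
  proof (cases "z = 0")
    case True then show ?thesis using d by (simp add: croot_def)
  next
    case False
    have "croot d z ^ d = exp (of_nat d * (Ln z / of_nat d))"
      using False by (simp add: croot_def exp_of_nat_mult[symmetric])
    also have "\<dots> = exp (Ln z)" using d by (simp add: field_simps)
    finally show ?thesis using False by simp
  qed
qed

lemma croot_norm_power: "d > 0 \<Longrightarrow> norm (croot d z) ^ d = norm z"
  by (metis croot_power norm_power)

lemma croot_nonzero: "z \<noteq> 0 \<Longrightarrow> croot d z \<noteq> 0"
  by (simp add: croot_def)


definition l1 :: "(nat \<Rightarrow> complex) set" where
  "l1 = {y. summable (\<lambda>k. norm (y k))}"

definition approx_prop :: "(nat \<Rightarrow> complex) set \<Rightarrow> ((nat \<Rightarrow> complex) \<Rightarrow> real) \<Rightarrow> bool" where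
  "approx_prop S N \<longleftrightarrow> (\<forall>x0\<in>S. \<forall>e>0. \<exists>L. \<exists>\<epsilon>>0. \<epsilon> \<le> 1 \<and>
     (\<forall>u y. (\<forall>k<L. norm (u k - x0 k) \<le> \<epsilon>) \<and> (\<forall>k\<ge>L. u k = 0) \<and>
        summable (\<lambda>k. norm (y k)) \<and> (\<Sum>k. norm (y k)) \<le> \<epsilon> \<longrightarrow>
        N (\<lambda>k. (u k + y k) - x0 k) < e))"

lemma powr_le_self: "0 \<le> (t::real) \<Longrightarrow> t \<le> 1 \<Longrightarrow> 1 \<le> p \<Longrightarrow> t powr p \<le> t"
proof -
  assume a: "0 \<le> t" "t \<le> 1" "1 \<le> p"
  show ?thesis
  proof (cases "t = 0")
    case True then show ?thesis by simp
  next
    case False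
    have "t powr p \<le> t powr 1" using powr_mono'[of 1 p t] a by simp
    thus ?thesis using a False by simp
  qed
qed

lemma term_le_suminf: "summable (f::nat \<Rightarrow> real) \<Longrightarrow> (\<And>n. 0 \<le> f n) \<Longrightarrow> f k \<le> suminf f"
  using sum_le_suminf[of f "{k}"] by simp

lemma l1_lp: "1 \<le> p \<Longrightarrow> y \<in> l1 \<Longrightarrow> y \<in> lp_space p"
proof -
  assume p: "1 \<le> p" and y: "y \<in> l1"
  have s: "summable (\<lambda>k. norm (y k))" using y by (simp add: l1_def)
  have "(\<lambda>k. norm (y k)) \<longlonglongrightarrow> 0" by (rule summable_LIMSEQ_zero[OF s])
  hence "eventually (\<lambda>k. norm (y k) < 1) sequentially" by (rule order_tendstoD(2)) simp
  then obtain N where N: "\<forall>k\<ge>N. norm (y k) < 1"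
    by (auto simp: eventually_sequentially)
  have "summable (\<lambda>k. norm (y k) powr p)"
  proof (rule summable_comparison_test'[OF s])
    fix n assume "N \<le> n"
    thus "norm (norm (y n) powr p) \<le> norm (y n)"
      using N powr_le_self[of "norm (y n)" p] p by auto
  qed
  thus ?thesis by (simp add: lp_space_def)
qed

lemma l1_c0: "y \<in> l1 \<Longrightarrow> y \<in> c0_space"
proof -
  assume y: "y \<in> l1"
  have s: "summable (\<lambda>k. norm (y k))" using y by (simp add: l1_def)
  have "(\<lambda>k. norm (y k)) \<longlonglongrightarrow> 0" by (rule summable_LIMSEQ_zero[OF s])
  hence "y \<longlonglongrightarrow> 0" by (simp add: tendsto_norm_zero_iff)
  thus ?thesis by (simp add: c0_space_def)
qed

lemma approx_c0: "approx_prop c0_space c0_norm"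
  unfolding approx_prop_def
proof (intro ballI allI impI)
  fix x0 and e :: real
  assume x0: "x0 \<in> c0_space" and e: "e > 0"
  have "x0 \<longlonglongrightarrow> 0" using x0 by (simp add: c0_space_def)
  hence "(\<lambda>k. norm (x0 k)) \<longlonglongrightarrow> 0" by (simp add: tendsto_norm_zero_iff)
  hence "eventually (\<lambda>k. norm (x0 k) < e/4) sequentially" by (rule order_tendstoD(2)) (use e in simp)
  then obtain L where L: "\<forall>k\<ge>L. norm (x0 k) < e/4"
    by (auto simp: eventually_sequentially)
  define \<epsilon> where "\<epsilon> = min 1 (e/4)"
  have \<epsilon>: "\<epsilon> > 0" "\<epsilon> \<le> 1" "\<epsilon> \<le> e/4" using e by (auto simp: \<epsilon>_def)
  show "\<exists>L. \<exists>\<epsilon>>0. \<epsilon> \<le> 1 \<and>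
     (\<forall>u y. (\<forall>k<L. norm (u k - x0 k) \<le> \<epsilon>) \<and> (\<forall>k\<ge>L. u k = 0) \<and>
        summable (\<lambda>k. norm (y k)) \<and> (\<Sum>k. norm (y k)) \<le> \<epsilon> \<longrightarrow>
        c0_norm (\<lambda>k. (u k + y k) - x0 k) < e)"
  proof (intro exI[of _ L] exI[of _ \<epsilon>] conjI allI impI \<epsilon>)
    fix u y :: "nat \<Rightarrow> complex"
    assume a: "(\<forall>k<L. norm (u k - x0 k) \<le> \<epsilon>) \<and> (\<forall>k\<ge>L. u k = 0) \<and>
        summable (\<lambda>k. norm (y k)) \<and> (\<Sum>k. norm (y k)) \<le> \<epsilon>"
    have bd: "norm ((u k + y k) - x0 k) \<le> e/2" for k
    proof -
      have yk: "norm (y k) \<le> \<epsilon>"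
        using term_le_suminf[of "\<lambda>k. norm (y k)" k] a by auto
      have zk: "norm (u k - x0 k) \<le> e/4"
      proof (cases "k < L")
        case True then show ?thesis using a \<epsilon> by force
      next
        case False
        hence "norm (x0 k) < e/4" using L by simp
        thus ?thesis using a False by simp
      qed
      have "norm ((u k + y k) - x0 k) \<le> norm (y k) + norm (u k - x0 k)"
        by (metis add.commute add_diff_eq norm_triangle_ineq)
      thus ?thesis using yk zk \<epsilon> by linarith
    qed
    have "c0_norm (\<lambda>k. (u k + y k) - x0 k) \<le> e/2"
      unfolding c0_norm_def by (rule cSUP_least) (use bd in auto)
    thus "c0_norm (\<lambda>k. (u k + y k) - x0 k) < e" using e by linarith
  qed
qed

lemma approx_lp: assumes p: "1 \<le> p" shows "approx_prop (lp_space p) (lp_norm p)"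
  unfolding approx_prop_def
proof (intro ballI allI impI)
  fix x0 and e :: real
  assume x0: "x0 \<in> lp_space p" and e: "e > 0"
  have sx: "summable (\<lambda>k. norm (x0 k) powr p)" using x0 by (simp add: lp_space_def)
  define \<eta> where "\<eta> = e powr p / (4 * 2 powr p)"
  have \<eta>: "\<eta> > 0" using e by (simp add: \<eta>_def)
  obtain L where L: "norm (\<Sum>i. norm (x0 (i + L)) powr p) < \<eta>"
    using suminf_exist_split[OF \<eta> sx] by blast
  define \<epsilon> where "\<epsilon> = min 1 (\<eta> / (L+1))"
  have \<epsilon>3: "\<epsilon> * (L+1) \<le> \<eta>"
  proof (cases "\<eta> / (L+1) \<le> 1")
    case True then show ?thesis by (simp add: \<epsilon>_def min_def)
  next
    case False
    hence "\<eta> > L + 1" by (simp add: field_simps)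
    thus ?thesis using False by (simp add: \<epsilon>_def min_def)
  qed
  have \<epsilon>: "\<epsilon> > 0" "\<epsilon> \<le> 1" "\<epsilon> * (L+1) \<le> \<eta>" using \<eta> \<epsilon>3 by (auto simp: \<epsilon>_def)
  show "\<exists>L. \<exists>\<epsilon>>0. \<epsilon> \<le> 1 \<and>
     (\<forall>u y. (\<forall>k<L. norm (u k - x0 k) \<le> \<epsilon>) \<and> (\<forall>k\<ge>L. u k = 0) \<and>
        summable (\<lambda>k. norm (y k)) \<and> (\<Sum>k. norm (y k)) \<le> \<epsilon> \<longrightarrow>
        lp_norm p (\<lambda>k. (u k + y k) - x0 k) < e)"
  proof (intro exI[of _ L] exI[of _ \<epsilon>] conjI allI impI \<epsilon>)
    fix u y :: "nat \<Rightarrow> complex"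
    assume a: "(\<forall>k<L. norm (u k - x0 k) \<le> \<epsilon>) \<and> (\<forall>k\<ge>L. u k = 0) \<and>
        summable (\<lambda>k. norm (y k)) \<and> (\<Sum>k. norm (y k)) \<le> \<epsilon>"
    have sy: "summable (\<lambda>k. norm (y k))" using a by blast
    have yk: "norm (y k) \<le> 1" for k
      using term_le_suminf[of "\<lambda>k. norm (y k)" k] a \<epsilon> by auto
    have yp: "norm (y k) powr p \<le> norm (y k)" for k using powr_le_self[OF _ yk p] by simp
    have syp: "summable (\<lambda>k. norm (y k) powr p)"
      by (rule summable_comparison_test[OF _ sy]) (use yp in auto)
    have syp_le: "(\<Sum>k. norm (y k) powr p) \<le> \<epsilon>"
      using suminf_le[OF yp syp sy] a by linarith
    define z where "z k = u k - x0 k" for k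
    have zt: "norm (z (i + L)) powr p = norm (x0 (i + L)) powr p" for i
      using a by (simp add: z_def)
    have szt: "summable (\<lambda>i. norm (z (i + L)) powr p)"
      unfolding zt using sx summable_iff_shift[of "\<lambda>k. norm (x0 k) powr p" L] by simp
    hence szp: "summable (\<lambda>k. norm (z k) powr p)" using summable_iff_shift[of "\<lambda>k. norm (z k) powr p" L] by simp
    have zhead: "norm (z k) powr p \<le> \<epsilon>" if "k < L" for k
    proof -
      have "norm (z k) \<le> \<epsilon>" using a that by (simp add: z_def)
      hence "norm (z k) powr p \<le> norm (z k)" using powr_le_self[of "norm (z k)" p] \<epsilon> p by auto
      thus ?thesis using \<open>norm (z k) \<le> \<epsilon>\<close> by linarith
    qed
    have "(\<Sum>k. norm (z k) powr p) = (\<Sum>i. norm (z (i + L)) powr p) + (\<Sum>k<L. norm (z k) powr p)"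
      by (rule suminf_split_initial_segment[OF szp])
    also have "(\<Sum>i. norm (z (i + L)) powr p) = (\<Sum>i. norm (x0 (i + L)) powr p)"
      unfolding zt ..
    also have "\<dots> < \<eta>" using L by simp
    also have "(\<Sum>k<L. norm (z k) powr p) \<le> (\<Sum>k<L. \<epsilon>)"
      by (rule sum_mono) (use zhead in auto)
    finally have szp_le: "(\<Sum>k. norm (z k) powr p) < \<eta> + L * \<epsilon>" by simp
    define w where "w k = (u k + y k) - x0 k" for k
    have wk: "norm (w k) powr p \<le> 2 powr p * (norm (y k) powr p + norm (z k) powr p)" for k
    proof -
      have "norm (w k) \<le> norm (y k) + norm (z k)"
        unfolding w_def z_def by (metis add.commute add_diff_eq norm_triangle_ineq)
      also have "\<dots> \<le> 2 * max (norm (y k)) (norm (z k))" by simp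
      finally have "norm (w k) powr p \<le> (2 * max (norm (y k)) (norm (z k))) powr p"
        using p by (intro powr_mono2) auto
      also have "\<dots> = 2 powr p * max (norm (y k)) (norm (z k)) powr p"
        by (simp add: powr_mult)
      also have "max (norm (y k)) (norm (z k)) powr p \<le> norm (y k) powr p + norm (z k) powr p"
        by (simp add: max_def)
      finally show ?thesis by (simp add: mult_left_mono)
    qed
    have sg: "summable (\<lambda>k. 2 powr p * (norm (y k) powr p + norm (z k) powr p))"
      by (intro summable_mult summable_add syp szp)
    have swp: "summable (\<lambda>k. norm (w k) powr p)"
      by (rule summable_comparison_test[OF _ sg]) (use wk in auto)
    have "(\<Sum>k. norm (w k) powr p) \<le> (\<Sum>k. 2 powr p * (norm (y k) powr p + norm (z k) powr p))"
      by (rule suminf_le[OF wk swp sg])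
    also have "\<dots> = 2 powr p * ((\<Sum>k. norm (y k) powr p) + (\<Sum>k. norm (z k) powr p))"
      by (simp add: suminf_mult suminf_add[OF syp szp] summable_add[OF syp szp])
    also have "\<dots> < 2 powr p * (\<epsilon> + (\<eta> + L * \<epsilon>))"
      using syp_le szp_le by (intro mult_strict_left_mono) auto
    also have "\<dots> \<le> 2 powr p * (2 * \<eta>)"
      using \<epsilon> by (intro mult_left_mono) (auto simp: field_simps)
    also have "\<dots> = e powr p / 2" by (simp add: \<eta>_def)
    also have "\<dots> < e powr p" using e by simp
    finally have lt: "(\<Sum>k. norm (w k) powr p) < e powr p" .
    have nn: "0 \<le> (\<Sum>k. norm (w k) powr p)" by (intro suminf_nonneg swp) auto
    have "lp_norm p w = (\<Sum>k. norm (w k) powr p) powr (1/p)" by (simp add: lp_norm_def)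
    also have "\<dots> < (e powr p) powr (1/p)"
      using p by (intro powr_less_mono2 nn lt) auto
    also have "\<dots> = e" using p e by (simp add: powr_powr)
    finally have "lp_norm p w < e" .
    moreover have "w = (\<lambda>k. (u k + y k) - x0 k)" by (rule ext) (simp add: w_def)
    ultimately show "lp_norm p (\<lambda>k. (u k + y k) - x0 k) < e" by simp
  qed
qed


definition pord :: "complex poly \<Rightarrow> nat" where "pord P = (LEAST i. coeff P i \<noteq> 0)"
definition pC :: "complex poly \<Rightarrow> real" where "pC P = (\<Sum>i\<le>degree P. norm (coeff P i))"

lemma pord_coeff: "P \<noteq> 0 \<Longrightarrow> coeff P (pord P) \<noteq> 0"
  unfolding pord_def by (rule LeastI[of _ "degree P"]) (rule leading_coeff_neq_0)

lemma pord_below: "i < pord P \<Longrightarrow> coeff P i = 0"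
  unfolding pord_def using not_less_Least by blast

lemma pord_le_degree: "P \<noteq> 0 \<Longrightarrow> pord P \<le> degree P"
  using le_degree pord_coeff by blast

lemma pord_pos: "P \<noteq> 0 \<Longrightarrow> coeff P 0 = 0 \<Longrightarrow> pord P > 0"
  using pord_coeff by (metis gr0I)

lemma pC_nonneg: "pC P \<ge> 0" unfolding pC_def by (simp add: sum_nonneg)

lemma poly_bound1:
  assumes "norm z \<le> 1"
  shows "norm (poly P z) \<le> pC P * norm z ^ pord P"
proof -
  have "norm (poly P z) = norm (\<Sum>i\<le>degree P. coeff P i * z ^ i)" by (simp add: poly_altdef)
  also have "\<dots> \<le> (\<Sum>i\<le>degree P. norm (coeff P i * z ^ i))" by (rule norm_sum)
  also have "\<dots> \<le> (\<Sum>i\<le>degree P. norm (coeff P i) * norm z ^ pord P)"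
  proof (rule sum_mono)
    fix i assume "i \<in> {..degree P}"
    show "norm (coeff P i * z ^ i) \<le> norm (coeff P i) * norm z ^ pord P"
    proof (cases "i < pord P")
      case True then show ?thesis by (simp add: pord_below)
    next
      case False
      hence "norm z ^ i \<le> norm z ^ pord P" using assms by (intro power_decreasing) auto
      thus ?thesis by (simp add: norm_mult norm_power mult_left_mono)
    qed
  qed
  also have "\<dots> = pC P * norm z ^ pord P" by (simp add: pC_def sum_distrib_right)
  finally show ?thesis .
qed

lemma poly_bound2:
  assumes "norm z \<le> 1" "P \<noteq> 0"
  shows "norm (poly P z - coeff P (pord P) * z ^ pord P) \<le> pC P * norm z ^ Suc (pord P)"
proof -
  let ?d = "pord P"
  have dmem: "?d \<in> {..degree P}" using pord_le_degree[OF assms(2)] by simp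
  have "poly P z = (\<Sum>i\<le>degree P. coeff P i * z ^ i)" by (simp add: poly_altdef)
  also have "\<dots> = coeff P ?d * z ^ ?d + (\<Sum>i\<in>{..degree P} - {?d}. coeff P i * z ^ i)"
    using dmem by (simp add: sum.remove)
  finally have e: "poly P z - coeff P ?d * z ^ ?d = (\<Sum>i\<in>{..degree P} - {?d}. coeff P i * z ^ i)" by simp
  have "norm (\<Sum>i\<in>{..degree P} - {?d}. coeff P i * z ^ i) \<le> (\<Sum>i\<in>{..degree P} - {?d}. norm (coeff P i * z ^ i))"
    by (rule norm_sum)
  also have "\<dots> \<le> (\<Sum>i\<in>{..degree P} - {?d}. norm (coeff P i) * norm z ^ Suc ?d)"
  proof (rule sum_mono)
    fix i assume i: "i \<in> {..degree P} - {?d}"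
    show "norm (coeff P i * z ^ i) \<le> norm (coeff P i) * norm z ^ Suc ?d"
    proof (cases "i < ?d")
      case True then show ?thesis by (simp add: pord_below)
    next
      case False
      hence "Suc ?d \<le> i" using i by auto
      hence "norm z ^ i \<le> norm z ^ Suc ?d" using assms by (intro power_decreasing) auto
      thus ?thesis by (simp add: norm_mult norm_power mult_left_mono)
    qed
  qed
  also have "\<dots> \<le> (\<Sum>i\<le>degree P. norm (coeff P i) * norm z ^ Suc ?d)"
    by (rule sum_mono2) auto
  also have "\<dots> = pC P * norm z ^ Suc ?d" by (simp add: pC_def sum_distrib_right)
  finally show ?thesis using e by simp
qed


type_synonym tgt = "(int \<times> int) list \<times> nat"

definition ea :: "nat \<Rightarrow> nat" where "ea e = nu (Suc e)"
definition etg :: "nat \<Rightarrow> tgt" where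
  "etg e = from_nat (nu (Suc (Suc e div 2 ^ ea e div 2)))"

primrec sq :: "nat \<Rightarrow> nat" where
  "sq 0 = 1"
| "sq (Suc e) = 8 * 2 ^ ea e * sq e"

definition tL :: "tgt \<Rightarrow> nat" where "tL t = length (fst t)"
definition tv :: "tgt \<Rightarrow> nat \<Rightarrow> complex" where
  "tv t m = (if m < tL t then Complex (of_int (fst (fst t ! m))) (of_int (snd (fst t ! m))) / 2 ^ snd t else 0)"
definition tW :: "tgt \<Rightarrow> real" where "tW t = 1 + (\<Sum>m<tL t. norm (tv t m))"

lemma tW_ge1: "tW t \<ge> 1" by (simp add: tW_def sum_nonneg)
lemma tv_le_tW: "norm (tv t m) \<le> tW t"
proof (cases "m < tL t")
  case True
  have "norm (tv t m) \<le> (\<Sum>m<tL t. norm (tv t m))"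
    using True by (intro member_le_sum) auto
  thus ?thesis by (simp add: tW_def)
next
  case False then show ?thesis using tW_ge1[of t] by (simp add: tv_def)
qed
lemma tv_zero: "tL t \<le> m \<Longrightarrow> tv t m = 0" by (simp add: tv_def)

lemma sq_pos: "sq e \<ge> 1" by (induction e) auto
lemma sq_Suc_ge: "sq (Suc e) \<ge> 8 * sq e"
proof -
  have "1 \<le> (2::nat) ^ ea e" by simp
  from mult_le_mono1[OF this, of "8 * sq e"] show ?thesis by (simp add: algebra_simps)
qed
lemma sq_less_Suc: "sq e < sq (Suc e)" using sq_pos[of e] sq_Suc_ge[of e] by linarith
lemma sq_strict: "strict_mono sq" by (rule strict_monoI_Suc) (rule sq_less_Suc)
lemma sq_mono: "e \<le> e' \<Longrightarrow> sq e \<le> sq e'" using sq_strict by (simp add: strict_mono_less_eq)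
lemma sq_less: "e < e' \<Longrightarrow> sq e < sq e'" using sq_strict by (simp add: strict_mono_less)
lemma sq_ge: "sq e \<ge> Suc e"
proof (induction e)
  case 0 then show ?case by simp
next
  case (Suc e) then show ?case using sq_Suc_ge[of e] by linarith
qed

lemma nu_shift_sum: "(\<Sum>e<E. nu (Suc e)) = (\<Sum>i=1..E. nu i)"
  by (induction E) auto

lemma sq_eq: "sq E = 8 ^ E * 2 ^ (\<Sum>e<E. ea e)"
  by (induction E) (auto simp: power_add)

lemma sq_le16: "sq E \<le> 16 ^ E"
proof -
  have "(\<Sum>e<E. ea e) \<le> E" using nu_sum_le[of E] by (simp add: ea_def nu_shift_sum)
  hence "(2::nat) ^ (\<Sum>e<E. ea e) \<le> 2 ^ E" by (intro power_increasing) auto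
  hence "sq E \<le> 8 ^ E * 2 ^ E" by (simp add: sq_eq)
  also have "\<dots> = 16 ^ E" by (simp flip: power_mult_distrib)
  finally show ?thesis .
qed

definition ep :: "nat \<Rightarrow> nat" where "ep q = (LEAST e. q < sq (Suc e))"

lemma ep_eq: "sq e \<le> q \<Longrightarrow> q < sq (Suc e) \<Longrightarrow> ep q = e"
proof -
  assume a: "sq e \<le> q" "q < sq (Suc e)"
  show "ep q = e" unfolding ep_def
  proof (rule Least_equality)
    show "q < sq (Suc e)" by fact
    fix y assume "q < sq (Suc y)"
    show "e \<le> y"
    proof (rule ccontr)
      assume "\<not> e \<le> y"
      hence "Suc y \<le> e" by simp
      hence "sq (Suc y) \<le> sq e" by (rule sq_mono)
      thus False using a \<open>q < sq (Suc y)\<close> by simp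
    qed
  qed
qed

lemma ep_bounds: "q \<ge> 1 \<Longrightarrow> sq (ep q) \<le> q \<and> q < sq (Suc (ep q))"
proof -
  assume q: "q \<ge> 1"
  have ex: "q < sq (Suc q)" using sq_ge[of "Suc q"] by simp
  have up: "q < sq (Suc (ep q))" unfolding ep_def by (rule LeastI[of _ q]) (rule ex)
  have lo: "sq (ep q) \<le> q"
  proof (cases "ep q")
    case 0 then show ?thesis using q by simp
  next
    case (Suc e')
    have "\<not> q < sq (Suc e')"
    proof
      assume "q < sq (Suc e')"
      hence "ep q \<le> e'" unfolding ep_def by (rule Least_le)
      thus False using Suc by simp
    qed
    thus ?thesis using Suc by simp
  qed
  show ?thesis using up lo by simp
qed

lemma inv_pow_mono: "1 \<le> (r::real) \<Longrightarrow> a \<le> b \<Longrightarrow> 1 / r ^ b \<le> 1 / r ^ a"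
proof -
  assume "1 \<le> r" "a \<le> b"
  hence "r ^ a \<le> r ^ b" "0 < r ^ a" by (auto intro: power_increasing)
  thus ?thesis by (intro divide_left_mono) auto
qed

lemma div_pow_mono: "1 \<le> (r::real) \<Longrightarrow> 0 \<le> a \<Longrightarrow> c \<le> b \<Longrightarrow> a / r ^ b \<le> a / r ^ c"
proof -
  assume "1 \<le> r" "0 \<le> a" "c \<le> b"
  hence "r ^ c \<le> r ^ b" "0 < r ^ c" by (auto intro: power_increasing)
  thus ?thesis using \<open>0 \<le> a\<close> by (intro divide_left_mono) auto
qed

lemma Suc_le_pow2: "Suc a \<le> 2 ^ a"
  by (induction a) auto

locale shiftctx =
  fixes lam :: complex
  assumes lam: "1 < norm lam"
begin

definition tK :: "tgt \<Rightarrow> nat" where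
  "tK t = (LEAST K. tL t < K \<and> tW t * norm lam ^ tL t * 2 ^ snd t \<le> norm lam ^ K)"

lemma tK_props: "tL t < tK t \<and> tW t * norm lam ^ tL t * 2 ^ snd t \<le> norm lam ^ tK t"
proof -
  obtain S where S: "\<forall>s\<ge>S. tW t * norm lam ^ tL t * 2 ^ snd t \<le> norm lam ^ s"
    using exp_large[OF lam] by blast
  let ?K = "max S (Suc (tL t))"
  have "tL t < ?K \<and> tW t * norm lam ^ tL t * 2 ^ snd t \<le> norm lam ^ ?K" using S by auto
  thus ?thesis unfolding tK_def by (rule LeastI)
qed

lemma tK_pos: "tK t > 0" using tK_props[of t] by simp

definition good :: "nat \<Rightarrow> tgt \<Rightarrow> nat \<Rightarrow> bool" where
  "good a t s \<longleftrightarrow> 2 * tK t \<le> s \<and> tW t \<le> norm lam ^ s \<and> (8 * 2 ^ a * real s + 2)^2 \<le> norm lam ^ s"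

lemma good_eventually: "\<exists>S. \<forall>s\<ge>S. good a t s"
proof -
  obtain S1 where S1: "\<forall>s\<ge>S1. tW t \<le> norm lam ^ s" using exp_large[OF lam] by blast
  obtain S2 where S2: "\<forall>s\<ge>S2. (8 * 2 ^ a * real s + 2)^2 \<le> norm lam ^ s"
    using poly_exp_bound[OF lam, of "8 * 2 ^ a" 2] by auto
  have "\<forall>s\<ge>max (max S1 S2) (2 * tK t). good a t s" using S1 S2 by (auto simp: good_def)
  thus ?thesis by blast
qed

definition ed :: "nat \<Rightarrow> nat" where "ed e = Suc (ea e)"
definition eK :: "nat \<Rightarrow> nat" where "eK e = tK (etg e)"
definition eL :: "nat \<Rightarrow> nat" where "eL e = tL (etg e)"
definition ev :: "nat \<Rightarrow> nat \<Rightarrow> complex" where "ev e = tv (etg e)"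
definition eb :: "nat \<Rightarrow> nat" where "eb e = 4 * ed e * sq e"
definition ecnt :: "nat \<Rightarrow> nat" where "ecnt e = ed e * sq e div eK e"
definition active :: "nat \<Rightarrow> bool" where "active e \<longleftrightarrow> good (ea e) (etg e) (sq e)"

definition xv :: "nat \<Rightarrow> complex" where
  "xv q = (let e = ep q; j = q - eb e in
     if active e \<and> eb e \<le> q \<and> j div eK e < ecnt e \<and> j mod eK e < eL e
     then croot (ed e) (ev e (j mod eK e) / lam ^ (eb e + eK e * (j div eK e))) else 0)"

lemma eK_pos: "eK e > 0" by (simp add: eK_def tK_pos)
lemma eL_less_eK: "eL e < eK e" using tK_props by (simp add: eL_def eK_def)
lemma ed_pos: "ed e > 0" by (simp add: ed_def)
lemma ed_le: "ed e \<le> 2 ^ ea e" by (simp add: ed_def Suc_le_pow2)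
lemma eb_ge: "sq e \<le> eb e" using ed_pos[of e] by (simp add: eb_def)

lemma block_loc:
  assumes "i < ecnt e" "m < eL e"
  shows "sq e \<le> eb e + eK e * i + m \<and> eb e + eK e * i + m < sq (Suc e)
         \<and> eb e + eK e * i + m < 5 * ed e * sq e"
proof -
  have "eK e * i + m < eK e * Suc i" using assms(2) eL_less_eK[of e] by simp
  also have "\<dots> \<le> eK e * ecnt e" using assms(1) by (intro mult_left_mono) auto
  also have "\<dots> \<le> ed e * sq e" by (simp add: ecnt_def)
  finally have h: "eK e * i + m < ed e * sq e" .
  have h2: "5 * ed e * sq e < sq (Suc e)"
  proof -
    have "5 * ed e * sq e \<le> 5 * 2 ^ ea e * sq e" using ed_le[of e] by simp
    also have "\<dots> < 8 * 2 ^ ea e * sq e" using sq_pos[of e] by simp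
    finally show ?thesis by simp
  qed
  have h3: "eb e + eK e * i + m < 5 * ed e * sq e" using h by (simp add: eb_def)
  have "eb e + eK e * i + m < sq (Suc e)" using less_trans[OF h3 h2] .
  thus ?thesis using \<open>eb e + eK e * i + m < 5 * ed e * sq e\<close> eb_ge[of e] by simp
qed

lemma xv_block:
  assumes "active e" "i < ecnt e" "m < eL e"
  shows "xv (eb e + eK e * i + m) = croot (ed e) (ev e m / lam ^ (eb e + eK e * i))"
proof -
  let ?q = "eb e + eK e * i + m"
  have epq: "ep ?q = e" using block_loc[OF assms(2,3)] by (intro ep_eq) auto
  have j: "?q - eb e = eK e * i + m" by simp
  have dv: "(eK e * i + m) div eK e = i" using eL_less_eK[of e] assms(3) eK_pos[of e] by simp
  have md: "(eK e * i + m) mod eK e = m" using eL_less_eK[of e] assms(3) by simp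
  show ?thesis unfolding xv_def Let_def epq j dv md using assms by simp
qed

lemma xv_nonzero:
  assumes "xv q \<noteq> 0"
  shows "\<exists>e i m. active e \<and> i < ecnt e \<and> m < eL e \<and> q = eb e + eK e * i + m"
proof -
  let ?e = "ep q"
  let ?j = "q - eb ?e"
  have c: "active ?e \<and> eb ?e \<le> q \<and> ?j div eK ?e < ecnt ?e \<and> ?j mod eK ?e < eL ?e"
    using assms by (auto simp: xv_def Let_def split: if_splits)
  have "q = eb ?e + eK ?e * (?j div eK ?e) + ?j mod eK ?e" using c by simp
  thus ?thesis using c by blast
qed

lemma xv_block_bound:
  assumes "active e" "i < ecnt e" "m < eL e"
  shows "norm (croot (ed e) (ev e m / lam ^ (eb e + eK e * i))) \<le> 1 / norm lam ^ (3 * sq e)"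
    and "norm (croot (ed e) (ev e m / lam ^ (eb e + eK e * i))) ^ ed e = norm (ev e m) / norm lam ^ (eb e + eK e * i)"
proof -
  let ?n = "eb e + eK e * i"
  let ?w = "croot (ed e) (ev e m / lam ^ ?n)"
  let ?r = "norm lam"
  let ?s = "sq e" and ?d = "ed e"
  have r1: "?r > 1" using lam .
  show wd: "norm ?w ^ ?d = norm (ev e m) / ?r ^ ?n"
    using croot_norm_power[OF ed_pos[of e]] by (simp add: norm_divide norm_power)
  have g: "tW (etg e) \<le> ?r ^ ?s" using assms(1) by (simp add: active_def good_def)
  have "norm (ev e m) \<le> ?r ^ ?s" using tv_le_tW[of "etg e" m] g by (simp add: ev_def)
  also have "\<dots> \<le> ?r ^ (?d * ?s)" using r1 ed_pos[of e] by (intro power_increasing) auto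
  finally have vb: "norm (ev e m) \<le> ?r ^ (?d * ?s)" .
  have nge: "4 * (?d * ?s) \<le> ?n" by (simp add: eb_def)
  have "norm ?w ^ ?d \<le> ?r ^ (?d * ?s) / ?r ^ ?n" unfolding wd
    using r1 vb by (intro divide_right_mono) auto
  also have "\<dots> \<le> ?r ^ (?d * ?s) / ?r ^ (4 * (?d * ?s))"
    using r1 nge by (intro div_pow_mono) auto
  also have "\<dots> = 1 / ?r ^ (3 * (?d * ?s))"
  proof -
    have "?r ^ (4 * (?d * ?s)) = ?r ^ (?d * ?s) * ?r ^ (3 * (?d * ?s))"
      by (simp add: power_add[symmetric])
    thus ?thesis using r1 by simp
  qed
  also have "\<dots> = (1 / ?r ^ (3 * ?s)) ^ ?d"
    by (simp add: power_mult[symmetric] power_divide mult.commute mult.left_commute)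
  finally have "norm ?w ^ Suc (ea e) \<le> (1 / ?r ^ (3 * ?s)) ^ Suc (ea e)" by (simp add: ed_def)
  thus "norm ?w \<le> 1 / ?r ^ (3 * ?s)"
    by (rule power_le_imp_le_base) (use r1 in simp)
qed

lemma active_quad:
  assumes "active e" "q < sq (Suc e)"
  shows "(real q + 1) * (real q + 2) \<le> norm lam ^ sq e"
proof -
  have g: "(8 * 2 ^ ea e * real (sq e) + 2)^2 \<le> norm lam ^ sq e"
    using assms(1) by (simp add: active_def good_def)
  have "real q + 2 \<le> 8 * 2 ^ ea e * real (sq e) + 2"
  proof -
    have "q \<le> sq (Suc e)" using assms(2) by linarith
    hence "real q \<le> real (sq (Suc e))" by (simp only: of_nat_le_iff)
    also have "\<dots> = 8 * 2 ^ ea e * real (sq e)" by simp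
    finally show ?thesis by simp
  qed
  hence "(real q + 1) * (real q + 2) \<le> (8 * 2 ^ ea e * real (sq e) + 2) * (8 * 2 ^ ea e * real (sq e) + 2)"
    by (intro mult_mono) auto
  thus ?thesis using g by (simp add: power2_eq_square)
qed

lemma xv_bound:
  shows "norm (xv q) \<le> 1 / ((real q + 1) * (real q + 2))"
proof (cases "xv q = 0")
  case True then show ?thesis by simp
next
  case False
  then obtain e i m where b: "active e" "i < ecnt e" "m < eL e" "q = eb e + eK e * i + m"
    using xv_nonzero by blast
  have loc: "q < sq (Suc e)" using block_loc[OF b(2,3)] b(4) by simp
  have r1: "norm lam > 1" using lam .
  have "norm (xv q) \<le> 1 / norm lam ^ (3 * sq e)" using xv_block[OF b(1-3)] xv_block_bound(1)[OF b(1-3)] b(4) by simp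
  also have "\<dots> \<le> 1 / norm lam ^ sq e"
    using r1 by (intro inv_pow_mono) auto
  also have "\<dots> \<le> 1 / ((real q + 1) * (real q + 2))"
    using active_quad[OF b(1) loc] by (intro frac_le) (auto intro: mult_pos_pos)
  finally show ?thesis .
qed

lemma xv_le1: "norm (xv q) \<le> 1"
proof -
  have "1 \<le> (real q + 1) * (real q + 2)"
    using mult_mono[of 1 "real q + 1" 1 "real q + 2"] by simp
  hence "1 / ((real q + 1) * (real q + 2)) \<le> 1" by simp
  thus ?thesis using xv_bound[of q] by linarith
qed

end

lemma geom_tail_partial:
  assumes "0 \<le> (q::real)" "q < 1"
  shows "(\<Sum>k<N. if K \<le> k then q ^ k else 0) \<le> q ^ K / (1 - q)"
proof -
  have eq: "(\<Sum>k<N. if K \<le> k then q ^ k else 0) * (1 - q) = (if K \<le> N then q ^ K - q ^ N else 0)"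
  proof (induction N)
    case 0 then show ?case by simp
  next
    case (Suc N)
    show ?case
    proof (cases "K \<le> N")
      case True
      let ?S = "(\<Sum>k<N. if K \<le> k then q ^ k else 0)"
      have "(?S + q ^ N) * (1 - q) = ?S * (1 - q) + q ^ N - q * q ^ N" by (simp add: algebra_simps)
      also have "\<dots> = q ^ K - q ^ Suc N" using Suc True by simp
      finally show ?thesis using True by simp
    next
      case False
      then show ?thesis using Suc by (cases "K = Suc N") (auto simp: algebra_simps)
    qed
  qed
  have "(\<Sum>k<N. if K \<le> k then q ^ k else 0) * (1 - q) \<le> q ^ K"
    unfolding eq using assms by auto
  thus ?thesis using assms by (simp add: field_simps)
qed

lemma telescope_partial:
  "(\<Sum>k<N. 1 / ((real j + real k + 1) * (real j + real k + 2))) = 1 / (real j + 1) - 1 / (real j + real N + 1)"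
proof (induction N)
  case 0 then show ?case by simp
next
  case (Suc N)
  have a: "real j + real N + 1 > 0" "real j + real N + 2 > 0" by auto
  have "1 / (real j + real N + 1) - 1 / (real j + real N + 2)
        = 1 / ((real j + real N + 1) * (real j + real N + 2))"
    using a by (simp add: field_simps)
  thus ?case using Suc by (simp add: algebra_simps)
qed

lemma telescope_le1: "(\<Sum>k<N. 1 / ((real j + real k + 1) * (real j + real k + 2))) \<le> 1"
proof -
  have "1 / (real j + 1) \<le> 1" by simp
  moreover have "1 / (real j + real N + 1) \<ge> 0" by simp
  ultimately show ?thesis unfolding telescope_partial by linarith
qed

lemma summable_inv_quad: "summable (\<lambda>q. 1 / ((real q + 1) * (real q + 2)))"
proof (rule summableI_nonneg_bounded)
  show "0 \<le> 1 / ((real n + 1) * (real n + 2))" for n by simp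
  show "(\<Sum>k<n. 1 / ((real k + 1) * (real k + 2))) \<le> 1" for n
    using telescope_le1[where N=n and j=0] by simp
qed

lemma if_sum_le:
  assumes "0 \<le> (c::real)"
  shows "(\<Sum>k<N. if k < L then c else 0) \<le> real L * c"
proof -
  have "(\<Sum>k<N. if k < L then c else 0) = (\<Sum>k\<in>{k\<in>{..<N}. k < L}. c)"
    by (rule sum.inter_filter[symmetric]) simp
  also have "\<dots> \<le> (\<Sum>k\<in>{..<L}. c)" using assms by (intro sum_mono2) auto
  finally show ?thesis by simp
qed

context shiftctx begin

lemma T_iter: "((\<lambda>x n. lam * backward_shift x n) ^^ n) f = (\<lambda>k. lam ^ n * f (n + k))"
  by (induction n) (auto simp: backward_shift_def)

lemma start_loc: "i < ecnt e \<Longrightarrow> eb e + eK e * i < sq (Suc e)"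
proof -
  assume i: "i < ecnt e"
  have "eK e * i < eK e * Suc i" using eK_pos[of e] by simp
  also have "\<dots> \<le> eK e * ecnt e" using i by (intro mult_left_mono) auto
  also have "\<dots> \<le> ed e * sq e" by (simp add: ecnt_def)
  finally have h: "eK e * i < ed e * sq e" .
  have "5 * ed e * sq e \<le> 5 * 2 ^ ea e * sq e" using ed_le[of e] by simp
  also have "\<dots> < 8 * 2 ^ ea e * sq e" using sq_pos[of e] by simp
  finally have h2: "5 * ed e * sq e < sq (Suc e)" by simp
  have "eb e + eK e * i < 5 * ed e * sq e" using h by (simp add: eb_def)
  thus ?thesis using h2 by linarith
qed

definition eW :: "nat \<Rightarrow> real" where "eW e = tW (etg e)"
definition eacc :: "nat \<Rightarrow> nat" where "eacc e = snd (etg e)"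

lemma poly_xv_bound: "coeff P 0 = 0 \<Longrightarrow> P \<noteq> 0 \<Longrightarrow> norm (poly P (xv q)) \<le> pC P * norm (xv q)"
proof -
  assume c0: "coeff P 0 = 0" and P: "P \<noteq> 0"
  have "norm (poly P (xv q)) \<le> pC P * norm (xv q) ^ pord P" by (rule poly_bound1[OF xv_le1])
  also have "\<dots> \<le> pC P * norm (xv q) ^ 1"
    using xv_le1[of q] pord_pos[OF P c0] pC_nonneg[of P]
    by (intro mult_left_mono power_decreasing) auto
  finally show ?thesis by simp
qed

lemma main_est:
  assumes P: "P \<noteq> 0" and c0: "coeff P 0 = 0" and act: "active e" and deg: "ed e = pord P"
    and i: "i < ecnt e" and n: "n = eb e + eK e * i"
  shows "(\<Sum>k<N. norm (lam ^ n * poly P (xv (n + k)) - coeff P (pord P) * ev e k))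
     \<le> pC P * (real (eL e) * eW e / norm lam ^ (3 * sq e)
               + norm lam / (norm lam - 1) / 2 ^ eacc e + 1 / norm lam ^ sq (Suc e))"
proof -
  let ?r = "norm lam"
  define C where "C = pC P"
  define d where "d = pord P"
  define s where "s = sq e"
  define s1 where "s1 = sq (Suc e)"
  define K where "K = eK e"
  define L where "L = eL e"
  define W where "W = eW e"
  have r1: "?r > 1" using lam .
  have rpos: "?r > 0" using r1 by linarith
  have lam0: "lam \<noteq> 0" by (rule ccontr) (use r1 in simp)
  have C0: "C \<ge> 0" using pC_nonneg by (simp add: C_def)
  have W1: "W \<ge> 1" using tW_ge1 by (simp add: W_def eW_def)
  have dpos: "d > 0" using pord_pos[OF P c0] by (simp add: d_def)
  have vW: "norm (ev e m) \<le> W" for m using tv_le_tW by (simp add: ev_def W_def eW_def)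
  define \<beta> where "\<beta> k = (if k < L then C * W / ?r ^ (3 * s) else 0)
      + (if K \<le> k then C * W * ?r ^ L * (1 / ?r) ^ k else 0)
      + C / ?r ^ s1 * (1 / ((real n + real k + 1) * (real n + real k + 2)))" for k
  have part_nonneg: "0 \<le> C * W / ?r ^ (3 * s)" "0 \<le> C * W * ?r ^ L * (1 / ?r) ^ k"
    "0 \<le> C / ?r ^ s1 * (1 / ((real n + real k + 1) * (real n + real k + 2)))" for k
    using C0 W1 rpos by auto
  have nloc: "n < s1" using start_loc[OF i] by (simp add: n s1_def)
  have nge: "s \<le> n" using eb_ge[of e] by (simp add: n s_def)
  have pt: "norm (lam ^ n * poly P (xv (n + k)) - coeff P (pord P) * ev e k) \<le> \<beta> k" for k
  proof (cases "k < L")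
    case True
    define w where "w = croot (ed e) (ev e k / lam ^ n)"
    have xq: "xv (n + k) = w" using xv_block[OF act i True[unfolded L_def]] by (simp add: n w_def)
    have wb: "norm w \<le> 1 / ?r ^ (3 * s)" using xv_block_bound(1)[OF act i True[unfolded L_def]] by (simp add: n w_def s_def)
    have wd: "norm w ^ d = norm (ev e k) / ?r ^ n"
      using xv_block_bound(2)[OF act i True[unfolded L_def]] by (simp add: n w_def deg d_def)
    have w1: "norm w \<le> 1" using wb r1 by (smt (verit) divide_le_eq_1 one_le_power)
    have wpow: "w ^ d = ev e k / lam ^ n" using croot_power[of d] dpos by (simp add: w_def deg d_def)
    have "lam ^ n * poly P w - coeff P d * ev e k = lam ^ n * (poly P w - coeff P d * w ^ d)"
      using lam0 by (simp add: wpow algebra_simps)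
    hence "norm (lam ^ n * poly P w - coeff P d * ev e k) = ?r ^ n * norm (poly P w - coeff P d * w ^ d)"
      by (simp add: norm_mult norm_power)
    also have "\<dots> \<le> ?r ^ n * (C * norm w ^ Suc d)"
      using poly_bound2[OF w1 P] by (intro mult_left_mono) (auto simp: C_def d_def)
    also have "\<dots> = C * (?r ^ n * norm w ^ d) * norm w" by (simp add: algebra_simps)
    also have "?r ^ n * norm w ^ d = norm (ev e k)" using wd rpos by simp
    also have "C * norm (ev e k) * norm w \<le> C * W * (1 / ?r ^ (3 * s))"
      using C0 W1 vW[of k] wb by (intro mult_mono) auto
    finally have "norm (lam ^ n * poly P (xv (n + k)) - coeff P (pord P) * ev e k) \<le> C * W / ?r ^ (3 * s)"
      using xq by (simp add: d_def)
    thus ?thesis using part_nonneg(1) part_nonneg(2)[of k] part_nonneg(3)[of k] True by (simp add: \<beta>_def)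
  next
    case False
    have v0: "ev e k = 0" using False tv_zero by (simp add: ev_def L_def eL_def)
    show ?thesis
    proof (cases "xv (n + k) = 0")
      case True
      hence "norm (lam ^ n * poly P (xv (n + k)) - coeff P (pord P) * ev e k) = 0"
        using v0 c0 by (simp add: poly_0_coeff_0)
      thus ?thesis using part_nonneg(1) part_nonneg(2)[of k] part_nonneg(3)[of k] by (simp add: \<beta>_def)
    next
      case nz: False
      obtain e' i' m' where b: "active e'" "i' < ecnt e'" "m' < eL e'" "n + k = eb e' + eK e' * i' + m'"
        using xv_nonzero[OF nz] by blast
      have xb1: "norm (xv (n + k)) \<le> 1" by (rule xv_le1)
      have base: "norm (lam ^ n * poly P (xv (n + k)) - coeff P (pord P) * ev e k) \<le> ?r ^ n * (C * norm (xv (n + k)) ^ d)"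
        using v0 poly_bound1[OF xb1, of P] rpos by (simp add: norm_mult norm_power C_def d_def mult_left_mono)
      show ?thesis
      proof (cases "e' = e")
        case True
        have ii: "i < i'"
        proof (rule ccontr)
          assume "\<not> i < i'"
          hence le: "eK e * i' \<le> eK e * i" by simp
          have eq: "eK e * i + k = eK e * i' + m'" using b(4) True by (simp add: n)
          have "m' < L" using b(3) True by (simp add: L_def)
          hence "k < L" using eq le by linarith
          thus False using False by simp
        qed
        define n' where "n' = eb e + K * i'"
        have xq: "xv (n + k) = croot (ed e) (ev e m' / lam ^ n')"
          using xv_block[OF b(1-3)] b(4) True by (simp add: n'_def K_def)
        have xd: "norm (xv (n + k)) ^ d = norm (ev e m') / ?r ^ n'"
          using xv_block_bound(2)[OF b(1-3)] True xq by (simp add: n'_def K_def deg d_def)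
        have kK: "K \<le> k"
        proof -
          have "K * i + K \<le> K * i'" using ii by (metis mult_Suc_right Suc_le_eq mult_le_mono2 add.commute)
          thus ?thesis using b(4) True by (simp add: n K_def)
        qed
        have nk: "n + k < n' + L" using b(3,4) True by (simp add: n'_def K_def L_def)
        have "?r ^ n * (C * norm (xv (n + k)) ^ d) = C * norm (ev e m') * (?r ^ n / ?r ^ n')"
          using xd by (simp add: field_simps)
        also have "\<dots> \<le> C * W * (?r ^ L * (1 / ?r) ^ k)"
        proof (rule mult_mono)
          show "C * norm (ev e m') \<le> C * W" using C0 vW by (intro mult_left_mono) auto
          have "?r ^ (n + k) \<le> ?r ^ (n' + L)" using nk r1 by (intro power_increasing) auto
          hence "?r ^ n * ?r ^ k \<le> ?r ^ L * ?r ^ n'" by (simp add: power_add mult.commute)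
          thus "?r ^ n / ?r ^ n' \<le> ?r ^ L * (1 / ?r) ^ k"
            using rpos by (simp add: field_simps power_one_over)
        qed (use C0 W1 rpos in auto)
        finally have "norm (lam ^ n * poly P (xv (n + k)) - coeff P (pord P) * ev e k) \<le> C * W * ?r ^ L * (1 / ?r) ^ k"
          using base by (simp add: mult.assoc)
        thus ?thesis using part_nonneg(1) part_nonneg(2)[of k] part_nonneg(3)[of k] kK False by (simp add: \<beta>_def)
      next
        case ne: False
        let ?s' = "sq e'"
        have qloc: "sq e' \<le> n + k" "n + k < sq (Suc e')" using block_loc[OF b(2,3)] b(4) by auto
        have "e < e'"
        proof (rule ccontr)
          assume "\<not> e < e'"
          hence "Suc e' \<le> e" using ne by simp
          hence "sq (Suc e') \<le> sq e" by (rule sq_mono)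
          hence "sq (Suc e') \<le> s" by (simp only: s_def)
          thus False using qloc nge by simp
        qed
        hence "Suc e \<le> e'" by simp
        hence s1le: "s1 \<le> ?s'" unfolding s1_def by (rule sq_mono)
        have xq: "norm (xv (n + k)) \<le> 1 / ?r ^ (3 * ?s')"
          using xv_block[OF b(1-3)] xv_block_bound(1)[OF b(1-3)] b(4) by simp
        have "norm (xv (n + k)) ^ d \<le> norm (xv (n + k)) ^ 1"
          using xb1 dpos by (intro power_decreasing) auto
        hence "?r ^ n * (C * norm (xv (n + k)) ^ d) \<le> ?r ^ n * (C * (1 / ?r ^ (3 * ?s')))"
          using xq C0 rpos by (intro mult_left_mono) auto
        also have "\<dots> = C * (?r ^ n / ?r ^ ?s') * (1 / ?r ^ ?s') * (1 / ?r ^ ?s')"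
        proof -
          have "3 * ?s' = ?s' + ?s' + ?s'" by simp
          hence "?r ^ (3 * ?s') = ?r ^ ?s' * ?r ^ ?s' * ?r ^ ?s'" by (simp only: power_add)
          thus ?thesis by simp
        qed
        also have "\<dots> \<le> C * 1 * (1 / ?r ^ s1) * (1 / ((real n + real k + 1) * (real n + real k + 2)))"
        proof (intro mult_mono)
          show "?r ^ n / ?r ^ ?s' \<le> 1" using nloc s1le r1 rpos by (simp add: power_increasing)
          show "1 / ?r ^ ?s' \<le> 1 / ?r ^ s1" using s1le r1 by (intro inv_pow_mono) auto
          have "(real (n + k) + 1) * (real (n + k) + 2) \<le> ?r ^ ?s'" by (rule active_quad[OF b(1) qloc(2)])
          thus "1 / ?r ^ ?s' \<le> 1 / ((real n + real k + 1) * (real n + real k + 2))"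
            by (intro frac_le) (auto intro: mult_pos_pos)
        qed (use C0 rpos in auto)
        finally have "norm (lam ^ n * poly P (xv (n + k)) - coeff P (pord P) * ev e k) \<le> C / ?r ^ s1 * (1 / ((real n + real k + 1) * (real n + real k + 2)))"
          using base by simp
        thus ?thesis using part_nonneg(1) part_nonneg(2)[of k] part_nonneg(3)[of k] by (simp add: \<beta>_def)
      qed
    qed
  qed
  have "(\<Sum>k<N. norm (lam ^ n * poly P (xv (n + k)) - coeff P (pord P) * ev e k)) \<le> (\<Sum>k<N. \<beta> k)"
    by (rule sum_mono) (rule pt)
  also have "\<dots> = (\<Sum>k<N. if k < L then C * W / ?r ^ (3 * s) else 0)
      + (C * W * ?r ^ L) * (\<Sum>k<N. if K \<le> k then (1 / ?r) ^ k else 0)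
      + C / ?r ^ s1 * (\<Sum>k<N. 1 / ((real n + real k + 1) * (real n + real k + 2)))"
  proof -
    have "(\<Sum>k<N. \<beta> k) = (\<Sum>k<N. if k < L then C * W / ?r ^ (3 * s) else 0)
      + (\<Sum>k<N. if K \<le> k then C * W * ?r ^ L * (1 / ?r) ^ k else 0)
      + (\<Sum>k<N. C / ?r ^ s1 * (1 / ((real n + real k + 1) * (real n + real k + 2))))"
      unfolding \<beta>_def by (simp only: sum.distrib)
    moreover have "(\<Sum>k<N. if K \<le> k then C * W * ?r ^ L * (1 / ?r) ^ k else 0)
       = (C * W * ?r ^ L) * (\<Sum>k<N. if K \<le> k then (1 / ?r) ^ k else 0)"
      by (subst sum_distrib_left) (rule sum.cong, auto)
    moreover have "(\<Sum>k<N. C / ?r ^ s1 * (1 / ((real n + real k + 1) * (real n + real k + 2))))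
       = C / ?r ^ s1 * (\<Sum>k<N. 1 / ((real n + real k + 1) * (real n + real k + 2)))"
      by (rule sum_distrib_left[symmetric])
    ultimately show ?thesis by simp
  qed
  also have "\<dots> \<le> real L * (C * W / ?r ^ (3 * s)) + (C * W * ?r ^ L) * ((1 / ?r) ^ K / (1 - 1 / ?r))
      + C / ?r ^ s1 * 1"
  proof (intro add_mono mult_left_mono)
    show "(\<Sum>k<N. if k < L then C * W / ?r ^ (3 * s) else 0) \<le> real L * (C * W / ?r ^ (3 * s))"
      using part_nonneg by (intro if_sum_le) auto
    show "(\<Sum>k<N. if K \<le> k then (1 / ?r) ^ k else 0) \<le> (1 / ?r) ^ K / (1 - 1 / ?r)"
      using r1 by (intro geom_tail_partial) (auto simp: divide_less_eq)
    show "(\<Sum>k<N. 1 / ((real n + real k + 1) * (real n + real k + 2))) \<le> 1" by (rule telescope_le1)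
  qed (use C0 W1 rpos in auto)
  finally have S1: "(\<Sum>k<N. norm (lam ^ n * poly P (xv (n + k)) - coeff P (pord P) * ev e k))
     \<le> real L * (C * W / ?r ^ (3 * s)) + (C * W * ?r ^ L) * ((1 / ?r) ^ K / (1 - 1 / ?r)) + C / ?r ^ s1 * 1" .
  have E2: "(C * W * ?r ^ L) * ((1 / ?r) ^ K / (1 - 1 / ?r)) = C * (W * ?r ^ L / ?r ^ K) * (?r / (?r - 1))"
  proof -
    have "1 - 1 / ?r = (?r - 1) / ?r" using rpos by (simp add: field_simps)
    hence "(1 / ?r) ^ K / (1 - 1 / ?r) = (1 / ?r ^ K) / ((?r - 1) / ?r)" by (simp add: power_one_over)
    also have "\<dots> = (1 / ?r ^ K) * (?r / (?r - 1))" by simp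
    finally show ?thesis by simp
  qed
  have Q: "W * ?r ^ L / ?r ^ K \<le> 1 / 2 ^ eacc e"
  proof -
    have "W * ?r ^ L * 2 ^ eacc e \<le> ?r ^ K"
      using tK_props[of "etg e"] by (simp add: W_def eW_def L_def eL_def K_def eK_def eacc_def)
    thus ?thesis using rpos by (simp add: field_simps)
  qed
  have rr: "?r / (?r - 1) \<ge> 0" using r1 by simp
  have E3: "C * (W * ?r ^ L / ?r ^ K) * (?r / (?r - 1)) \<le> C * (1 / 2 ^ eacc e) * (?r / (?r - 1))"
    using Q C0 rr by (intro mult_right_mono mult_left_mono) auto
  have E4: "C * (1 / 2 ^ eacc e) * (?r / (?r - 1)) = C * (?r / (?r - 1) / 2 ^ eacc e)" by simp
  have E5: "real L * (C * W / ?r ^ (3 * s)) = C * (real L * W / ?r ^ (3 * s))" by simp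
  have E6: "C * (real L * W / ?r ^ (3 * s) + ?r / (?r - 1) / 2 ^ eacc e + 1 / ?r ^ s1)
     = C * (real L * W / ?r ^ (3 * s)) + C * (?r / (?r - 1) / 2 ^ eacc e) + C / ?r ^ s1 * 1"
    by (simp add: algebra_simps)
  have "(\<Sum>k<N. norm (lam ^ n * poly P (xv (n + k)) - coeff P (pord P) * ev e k))
     \<le> C * (real L * W / ?r ^ (3 * s) + ?r / (?r - 1) / 2 ^ eacc e + 1 / ?r ^ s1)"
    using S1 E2 E3 E4 E5 E6 by linarith
  thus ?thesis by (simp add: C_def W_def L_def s_def s1_def)
qed

end

definition cg :: "nat \<Rightarrow> nat \<Rightarrow> nat" where "cg c i = 2 ^ c * (2 * i + 1)"
definition cls :: "nat \<Rightarrow> tgt \<Rightarrow> nat \<Rightarrow> nat" where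
  "cls a t i = 2 ^ a * (2 * cg (to_nat t) i - 1) - 1"
definition cM :: "nat \<Rightarrow> tgt \<Rightarrow> nat" where "cM a t = 2 ^ (a + to_nat t + 2)"

lemma cg_pos: "cg c i \<ge> 1" by (simp add: cg_def Suc_le_eq)

lemma cls_Suc: "Suc (cls a t i) = 2 ^ a * (2 * cg (to_nat t) i - 1)"
proof -
  have "2 * cg (to_nat t) i - 1 \<ge> 1" using cg_pos[of "to_nat t" i] by simp
  hence "2 ^ a * (2 * cg (to_nat t) i - 1) \<ge> 1" by simp
  thus ?thesis by (simp add: cls_def)
qed

lemma cls_props: "ea (cls a t i) = a \<and> etg (cls a t i) = t"
proof -
  let ?g = "cg (to_nat t) i"
  have g1: "?g \<ge> 1" by (rule cg_pos)
  have odd: "odd (2 * ?g - 1)" using g1 by simp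
  have ea: "ea (cls a t i) = a" unfolding ea_def cls_Suc using nu_pow_odd[OF odd] .
  have d1: "Suc (cls a t i) div 2 ^ a = 2 * ?g - 1" unfolding cls_Suc by simp
  have d2: "(2 * ?g - 1) div 2 = ?g - 1" using g1 by linarith
  have d3: "Suc (?g - 1) = ?g" using g1 by simp
  have "nu ?g = to_nat t" unfolding cg_def by (rule nu_pow_odd) simp
  hence "etg (cls a t i) = t" unfolding etg_def ea d1 d2 d3 by simp
  thus ?thesis using ea by simp
qed

lemma cls_strict: "strict_mono (cls a t)"
proof (rule strict_monoI_Suc)
  fix i
  let ?c = "to_nat t"
  have "cg ?c i < cg ?c (Suc i)" by (simp add: cg_def)
  hence "2 * cg ?c i - 1 < 2 * cg ?c (Suc i) - 1" using cg_pos[of ?c i] by linarith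
  hence "2 ^ a * (2 * cg ?c i - 1) < 2 ^ a * (2 * cg ?c (Suc i) - 1)" by simp
  hence "Suc (cls a t i) < Suc (cls a t (Suc i))" unfolding cls_Suc .
  thus "cls a t i < cls a t (Suc i)" by simp
qed

lemma cls_ge: "i \<le> cls a t i" using strict_mono_imp_increasing[OF cls_strict] by blast

lemma cls_lt:
  assumes "i < E div cM a t"
  shows "cls a t i < E"
proof -
  let ?c = "to_nat t"
  have "Suc (cls a t i) \<le> 2 ^ a * (2 * cg ?c i)" unfolding cls_Suc by simp
  also have "\<dots> = 2 ^ (a + ?c + 1) * (2 * i + 1)" by (simp add: cg_def power_add algebra_simps)
  also have "\<dots> < 2 ^ (a + ?c + 1) * (2 * i + 2)" by simp
  also have "\<dots> = cM a t * Suc i" by (simp add: cM_def power_add algebra_simps)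
  also have "\<dots> \<le> cM a t * (E div cM a t)" using assms by (intro mult_le_mono2) simp
  also have "\<dots> \<le> E" by simp
  finally show ?thesis by simp
qed

lemma cM_pos: "cM a t > 0" by (simp add: cM_def)

lemma harm_le_ln: "n \<ge> 1 \<Longrightarrow> (harm n :: real) \<le> ln (real n) + 1"
  using euler_mascheroni_sequence_decreasing[of 1 n] by (simp add: harm_def)

lemma ln16: "ln (16::real) \<le> 4"
proof -
  have "ln (16::real) = ln (2 ^ 4)" by simp
  also have "\<dots> = 4 * ln 2" by (subst ln_realpow) auto
  finally show ?thesis using ln_2_less_1 by simp
qed

context shiftctx begin

definition Rset :: "nat \<Rightarrow> tgt \<Rightarrow> nat \<Rightarrow> nat set" where
  "Rset a t e1 = {n. \<exists>e i. e1 \<le> e \<and> ea e = a \<and> etg e = t \<and> i < ecnt e \<and> n = eb e + eK e * i}"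

definition Bl :: "nat \<Rightarrow> nat set" where "Bl e = (\<lambda>j. eb e + eK e * j) ` {..<ecnt e}"

lemma start_loc5: "i < ecnt e \<Longrightarrow> eb e + eK e * i < 5 * ed e * sq e"
proof -
  assume i: "i < ecnt e"
  have "eK e * i < eK e * Suc i" using eK_pos[of e] by simp
  also have "\<dots> \<le> eK e * ecnt e" using i by (intro mult_left_mono) auto
  also have "\<dots> \<le> ed e * sq e" by (simp add: ecnt_def)
  finally show ?thesis by (simp add: eb_def)
qed

lemma Bl_loc: "n \<in> Bl e \<Longrightarrow> sq e \<le> n \<and> n < sq (Suc e)"
proof -
  assume "n \<in> Bl e"
  then obtain j where j: "j < ecnt e" "n = eb e + eK e * j" unfolding Bl_def by auto
  have "sq e \<le> eb e" by (rule eb_ge)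
  thus ?thesis using start_loc[OF j(1)] j(2) by simp
qed

lemma Bl_card: "card (Bl e) = ecnt e"
proof -
  have "inj_on (\<lambda>j. eb e + eK e * j) {..<ecnt e}" using eK_pos[of e] by (intro inj_onI) simp
  thus ?thesis by (simp add: Bl_def card_image)
qed

lemma ecnt_bound:
  assumes "active e"
  shows "real (ecnt e) \<ge> real (ed e * sq e) / (2 * real (eK e))"
proof -
  let ?x = "ed e * sq e" and ?K = "eK e"
  have K0: "?K > 0" by (rule eK_pos)
  have g: "2 * ?K \<le> sq e" using assms by (simp add: active_def good_def eK_def)
  have "sq e \<le> ?x" using ed_pos[of e] by simp
  hence x2: "2 * ?K \<le> ?x" using g by linarith
  have "?x < ?K * (?x div ?K + 1)" using K0
    by (metis add.commute div_mult_mod_eq mod_less_divisor nat_add_left_cancel_less distrib_left mult.commute mult_1_right)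
  hence "real ?x < real ?K * (real (?x div ?K) + 1)" by (metis of_nat_add of_nat_1 of_nat_less_iff of_nat_mult)
  hence a: "real ?x / real ?K - 1 < real (?x div ?K)" using K0 by (simp add: field_simps)
  have "real ?x / (2 * real ?K) \<le> real ?x / real ?K - 1"
  proof -
    have "2 * real ?K \<le> real ?x" using x2 by (metis of_nat_le_iff of_nat_mult of_nat_numeral)
    thus ?thesis using K0 by (simp add: field_simps)
  qed
  thus ?thesis using a by (simp add: ecnt_def)
qed

lemma Bl_recip:
  assumes "active e"
  shows "(\<Sum>n\<in>Bl e. 1 / real n) \<ge> 1 / (10 * real (eK e))"
proof -
  let ?d = "ed e" and ?s = "sq e" and ?K = "eK e"
  have K0: "?K > 0" by (rule eK_pos)
  have inj: "inj_on (\<lambda>j. eb e + eK e * j) {..<ecnt e}" using K0 by (intro inj_onI) simp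
  have ds: "real (?d * ?s) > 0" using ed_pos[of e] sq_pos[of e] by simp
  have "(\<Sum>n\<in>Bl e. 1 / real n) = (\<Sum>j<ecnt e. 1 / real (eb e + eK e * j))"
    unfolding Bl_def by (simp add: sum.reindex[OF inj])
  also have "\<dots> \<ge> (\<Sum>j<ecnt e. 1 / real (5 * (?d * ?s)))"
  proof (rule sum_mono)
    fix j assume j: "j \<in> {..<ecnt e}"
    have "eb e + eK e * j < 5 * ?d * ?s" using start_loc5 j by simp
    hence "eb e + eK e * j \<le> 5 * (?d * ?s)" by (simp add: mult.assoc)
    hence B1: "real (eb e + eK e * j) \<le> real (5 * (?d * ?s))" by (simp only: of_nat_le_iff)
    have "eb e + eK e * j > 0" using eb_ge[of e] sq_pos[of e] by linarith
    hence B2: "0 < real (eb e + eK e * j)" by (simp only: of_nat_0_less_iff)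
    show "1 / real (5 * (?d * ?s)) \<le> 1 / real (eb e + eK e * j)"
      by (rule frac_le) (simp, simp, rule B2, rule B1)
  qed
  finally have "(\<Sum>n\<in>Bl e. 1 / real n) \<ge> real (ecnt e) / real (5 * (?d * ?s))" by simp
  moreover have "real (ecnt e) / real (5 * (?d * ?s)) \<ge> (real (?d * ?s) / (2 * real ?K)) / real (5 * (?d * ?s))"
    using ecnt_bound[OF assms] ds by (intro divide_right_mono) auto
  moreover have "(real (?d * ?s) / (2 * real ?K)) / real (5 * (?d * ?s)) = 1 / (10 * real ?K)"
  proof -
    have "ed e > 0" "sq e > 0" using ed_pos[of e] sq_pos[of e] by auto
    thus ?thesis using K0 by (simp add: field_simps)
  qed
  ultimately show ?thesis by linarith
qed

lemma density_main:
  assumes H: "\<forall>e\<ge>e1. ea e = a \<and> etg e = t \<longrightarrow> active e"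
    and RA: "Rset a t e1 \<subseteq> A"
  shows "lower_log_density A > 0 \<and> upper_density A > 0"
proof -
  let ?K = "tK t" and ?M = "cM a t"
  define c where "c = 1 / (100 * real ?K * real ?M)"
  have K0: "?K > 0" by (rule tK_pos)
  have M0: "?M > 0" by (rule cM_pos)
  have c0: "c > 0" using K0 M0 by (simp add: c_def)
  have clsH: "active (cls a t i) \<and> eK (cls a t i) = ?K \<and> ed (cls a t i) = Suc a" if "e1 \<le> i" for i
    using H cls_props[of a t i] cls_ge[of i a t] that by (auto simp: eK_def ed_def)
  have BlR: "Bl (cls a t i) \<subseteq> A" if "e1 \<le> i" for i
  proof
    fix n assume "n \<in> Bl (cls a t i)"
    then obtain j where "j < ecnt (cls a t i)" "n = eb (cls a t i) + eK (cls a t i) * j"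
      unfolding Bl_def by auto
    hence "n \<in> Rset a t e1" unfolding Rset_def using cls_props[of a t i] cls_ge[of i a t] that
      by (intro CollectI exI[of _ "cls a t i"] exI[of _ j]) auto
    thus "n \<in> A" using RA by blast
  qed
  define E1 where "E1 = 2 * ?M * (1 + e1) + 1"
  have ev: "eventually (\<lambda>N. ereal c \<le> ereal ((\<Sum>n\<in>{n\<in>A. 1 \<le> n \<and> n \<le> N}. 1 / real n) / (\<Sum>n\<in>{1..N}. 1 / real n))) sequentially"
    unfolding eventually_sequentially
  proof (intro exI[of _ "sq E1"] allI impI)
    fix N assume N: "sq E1 \<le> N"
    have N1: "N \<ge> 1" using sq_pos[of E1] N by linarith
    define E where "E = ep N"
    have EN: "sq E \<le> N" "N < sq (Suc E)" using ep_bounds[OF N1] by (auto simp: E_def)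
    have EE1: "E1 \<le> E"
    proof (rule ccontr)
      assume "\<not> E1 \<le> E"
      hence "Suc E \<le> E1" by simp
      hence "sq (Suc E) \<le> sq E1" by (rule sq_mono)
      thus False using N EN by simp
    qed
    define I where "I = {e1..<E div ?M}"
    let ?U = "\<Union>i\<in>I. Bl (cls a t i)"
    have fin: "finite {n\<in>A. 1 \<le> n \<and> n \<le> N}" by simp
    have Usub: "?U \<subseteq> {n\<in>A. 1 \<le> n \<and> n \<le> N}"
    proof
      fix n assume "n \<in> ?U"
      then obtain i where i: "i \<in> I" "n \<in> Bl (cls a t i)" by blast
      have "n \<in> A" using BlR[of i] i by (auto simp: I_def)
      moreover have "sq (cls a t i) \<le> n" "n < sq (Suc (cls a t i))" using Bl_loc[OF i(2)] by auto
      moreover have "cls a t i < E" using i(1) by (intro cls_lt) (simp add: I_def)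
      hence "sq (Suc (cls a t i)) \<le> sq E" by (intro sq_mono) simp
      ultimately show "n \<in> {n\<in>A. 1 \<le> n \<and> n \<le> N}" using EN sq_pos[of "cls a t i"] by auto
    qed
    have disj: "\<forall>i\<in>I. \<forall>j\<in>I. i \<noteq> j \<longrightarrow> Bl (cls a t i) \<inter> Bl (cls a t j) = {}"
    proof (intro ballI impI)
      fix i j assume "i \<in> I" "j \<in> I" "i \<noteq> j"
      hence ne: "cls a t i \<noteq> cls a t j" using strict_mono_eq[OF cls_strict] by simp
      show "Bl (cls a t i) \<inter> Bl (cls a t j) = {}"
      proof (rule ccontr)
        assume "Bl (cls a t i) \<inter> Bl (cls a t j) \<noteq> {}"
        then obtain n where n: "n \<in> Bl (cls a t i)" "n \<in> Bl (cls a t j)" by blast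
        have "ep n = cls a t i" using Bl_loc[OF n(1)] by (intro ep_eq) auto
        moreover have "ep n = cls a t j" using Bl_loc[OF n(2)] by (intro ep_eq) auto
        ultimately show False using ne by simp
      qed
    qed
    have finBl: "finite (Bl e)" for e by (simp add: Bl_def)
    have "(\<Sum>n\<in>{n\<in>A. 1 \<le> n \<and> n \<le> N}. 1 / real n) \<ge> (\<Sum>n\<in>?U. 1 / real n)"
      by (rule sum_mono2[OF fin Usub]) auto
    moreover have "(\<Sum>n\<in>?U. 1 / real n) = (\<Sum>i\<in>I. \<Sum>n\<in>Bl (cls a t i). 1 / real n)"
      by (rule sum.UNION_disjoint) (use finBl disj in \<open>auto simp: I_def\<close>)
    moreover have "(\<Sum>i\<in>I. \<Sum>n\<in>Bl (cls a t i). 1 / real n) \<ge> (\<Sum>i\<in>I. 1 / (10 * real ?K))"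
    proof (rule sum_mono)
      fix i assume "i \<in> I"
      hence "e1 \<le> i" by (simp add: I_def)
      thus "1 / (10 * real ?K) \<le> (\<Sum>n\<in>Bl (cls a t i). 1 / real n)"
        using Bl_recip[of "cls a t i"] clsH[of i] by simp
    qed
    ultimately have num: "(\<Sum>n\<in>{n\<in>A. 1 \<le> n \<and> n \<le> N}. 1 / real n) \<ge> real (card I) / (10 * real ?K)"
      by simp
    have cardI: "real (card I) \<ge> real E / real ?M - 1 - real e1"
    proof -
      have "card I = E div ?M - e1" by (simp add: I_def)
      hence "real (card I) \<ge> real (E div ?M) - real e1" by simp
      moreover have "real (E div ?M) \<ge> real E / real ?M - 1"
      proof -
        have "E < ?M * (E div ?M + 1)" using M0
          by (metis add.commute div_mult_mod_eq mod_less_divisor nat_add_left_cancel_less distrib_left mult.commute mult_1_right)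
        hence "real E < real ?M * (real (E div ?M) + 1)" by (metis of_nat_add of_nat_1 of_nat_less_iff of_nat_mult)
        thus ?thesis using M0 by (simp add: field_simps)
      qed
      ultimately show ?thesis by linarith
    qed
    have den: "(\<Sum>n\<in>{1..N}. 1 / real n) \<le> 4 * real E + 5"
    proof -
      have "(\<Sum>n\<in>{1..N}. 1 / real n) = harm N" by (simp add: harm_def inverse_eq_divide)
      also have "\<dots> \<le> ln (real N) + 1" using harm_le_ln[OF N1] .
      also have "ln (real N) \<le> ln (16 ^ Suc E)"
      proof -
        have "N \<le> 16 ^ Suc E" using EN sq_le16[of "Suc E"] by linarith
        hence "real N \<le> 16 ^ Suc E" by (metis of_nat_le_iff of_nat_numeral of_nat_power)
        thus ?thesis using N1 by simp
      qed
      also have "ln ((16::real) ^ Suc E) = real (Suc E) * ln 16" by (rule ln_realpow) 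
      also have "\<dots> \<le> real (Suc E) * 4" using ln16 by (intro mult_left_mono) auto
      finally show ?thesis by simp
    qed
    have denpos: "(\<Sum>n\<in>{1..N}. 1 / real n) > 0"
    proof -
      have "(\<Sum>n\<in>{1..N}. 1 / real n) \<ge> (\<Sum>n\<in>{1}. 1 / real n)"
        using N1 by (intro sum_mono2) auto
      thus ?thesis by simp
    qed
    have EM: "6 * real E \<ge> 10 * real ?M * (1 + real e1) + 5"
    proof -
      have "real E1 \<le> real E" using EE1 by simp
      moreover have "real E1 = 2 * real ?M * (1 + real e1) + 1" by (simp add: E1_def algebra_simps)
      ultimately show ?thesis using M0 by linarith
    qed
    have "c * (4 * real E + 5) \<le> (real E / real ?M - 1 - real e1) / (10 * real ?K)"
    proof -
      have "c * (4 * real E + 5) = (4 * real E + 5) / (100 * real ?K * real ?M)" by (simp add: c_def)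
      also have "\<dots> \<le> (10 * real ?M * (real E / real ?M - 1 - real e1)) / (100 * real ?K * real ?M)"
      proof (rule divide_right_mono)
        have k1: "10 * real ?M * (real E / real ?M - 1 - real e1) = 10 * real E - 10 * real ?M * (1 + real e1)"
          using M0 by (simp add: field_simps)
        define Z where "Z = 10 * real ?M * (1 + real e1)"
        have "Z + 5 \<le> 6 * real E" using EM by (simp add: Z_def)
        thus "4 * real E + 5 \<le> 10 * real ?M * (real E / real ?M - 1 - real e1)" unfolding k1 Z_def[symmetric] by linarith
      qed (use K0 M0 in simp)
      also have "\<dots> = (real E / real ?M - 1 - real e1) / (10 * real ?K)"
      proof -
        define X where "X = real E / real ?M - 1 - real e1"
        have "(10 * real ?M * X) / (100 * real ?K * real ?M) = X / (10 * real ?K)"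
          using K0 M0 by (simp add: field_simps)
        thus ?thesis by (simp only: X_def)
      qed
      finally show ?thesis .
    qed
    also have "\<dots> \<le> real (card I) / (10 * real ?K)" using cardI K0 by (intro divide_right_mono) auto
    also have "\<dots> \<le> (\<Sum>n\<in>{n\<in>A. 1 \<le> n \<and> n \<le> N}. 1 / real n)" by (rule num)
    finally have "c * (\<Sum>n\<in>{1..N}. 1 / real n) \<le> (\<Sum>n\<in>{n\<in>A. 1 \<le> n \<and> n \<le> N}. 1 / real n)"
      using den c0 by (smt (verit) mult_left_mono)
    hence "c \<le> (\<Sum>n\<in>{n\<in>A. 1 \<le> n \<and> n \<le> N}. 1 / real n) / (\<Sum>n\<in>{1..N}. 1 / real n)"
      using denpos by (simp add: field_simps)
    thus "ereal c \<le> ereal ((\<Sum>n\<in>{n\<in>A. 1 \<le> n \<and> n \<le> N}. 1 / real n) / (\<Sum>n\<in>{1..N}. 1 / real n))"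
      by simp
  qed
  have "ereal c \<le> lower_log_density A"
    unfolding lower_log_density_def by (rule Liminf_bounded[OF ev])
  hence low: "lower_log_density A > 0" using c0 by (metis ereal_less(2) order_less_le_trans)
  define c2 where "c2 = 1 / (12 * real ?K)"
  have c20: "c2 > 0" using K0 by (simp add: c2_def)
  have "ereal c2 \<le> upper_density A"
    unfolding upper_density_def
  proof (rule Limsup_greatest)
    fix P assume "eventually P sequentially"
    then obtain N0 where N0: "\<forall>n\<ge>N0. P n" by (auto simp: eventually_sequentially)
    define i where "i = N0 + e1"
    define e where "e = cls a t i"
    have ch: "active e \<and> eK e = ?K \<and> ed e = Suc a" using clsH[of i] by (simp add: i_def e_def)
    define N where "N = 5 * ed e * sq e"
    have "N0 \<le> N"
    proof -
      have "N0 \<le> i" by (simp add: i_def)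
      also have "\<dots> \<le> e" using cls_ge by (simp add: e_def)
      also have "\<dots> < sq e" using sq_ge[of e] by simp
      also have "\<dots> \<le> N" using ed_pos[of e] by (simp add: N_def)
      finally show ?thesis by simp
    qed
    hence PN: "P N" using N0 by simp
    have BlA: "Bl e \<subseteq> A \<inter> {0..N}"
    proof -
      have "Bl e \<subseteq> A" using BlR[of i] by (simp add: i_def e_def)
      moreover have "Bl e \<subseteq> {0..N}" unfolding Bl_def N_def using start_loc5 by fastforce
      ultimately show ?thesis by blast
    qed
    have "real (ecnt e) \<le> real (card (A \<inter> {0..N}))"
      using card_mono[OF _ BlA] Bl_card[of e] by simp
    moreover have "real (ecnt e) \<ge> real (ed e * sq e) / (2 * real ?K)" using ecnt_bound[of e] ch by simp
    ultimately have cA: "real (card (A \<inter> {0..N})) \<ge> real (ed e * sq e) / (2 * real ?K)" by linarith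
    have "ed e * sq e \<ge> 1" using ed_pos[of e] sq_pos[of e] by (simp add: Suc_le_eq)
    hence ds1: "real (ed e * sq e) \<ge> 1" by (metis of_nat_1 of_nat_le_iff)
    have "c2 \<le> real (card (A \<inter> {0..N})) / real (N + 1)"
    proof -
      have "real (N + 1) \<le> 6 * real (ed e * sq e)" using ds1 by (simp add: N_def)
      hence fr: "(real (ed e * sq e) / (2 * real ?K)) / (6 * real (ed e * sq e)) \<le> (real (ed e * sq e) / (2 * real ?K)) / real (N + 1)"
        using K0 ds1 by (intro frac_le) auto
      have "(real (ed e * sq e) / (2 * real ?K)) / (6 * real (ed e * sq e)) = c2"
      proof -
        define X where "X = real (ed e * sq e)"
        have "X > 0" using ds1 by (simp add: X_def)
        hence "(X / (2 * real ?K)) / (6 * X) = c2" using K0 by (simp add: c2_def field_simps)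
        thus ?thesis by (simp only: X_def)
      qed
      hence "c2 \<le> (real (ed e * sq e) / (2 * real ?K)) / real (N + 1)" using fr by simp
      also have "\<dots> \<le> real (card (A \<inter> {0..N})) / real (N + 1)"
        using cA by (intro divide_right_mono) auto
      finally show ?thesis .
    qed
    hence "ereal c2 \<le> ereal (real (card (A \<inter> {0..N})) / real (N + 1))" by simp
    also have "\<dots> \<le> (SUP x\<in>Collect P. ereal (real (card (A \<inter> {0..x})) / real (x + 1)))"
      using PN by (intro SUP_upper) simp
    finally show "ereal c2 \<le> (SUP x\<in>Collect P. ereal (real (card (A \<inter> {0..x})) / real (x + 1)))" .
  qed
  hence "upper_density A > 0" using c20 by (metis ereal_less(2) order_less_le_trans)
  thus ?thesis using low by simp
qed

end

lemma round_err: "\<bar>real_of_int \<lfloor>2 ^ k * a\<rfloor> / 2 ^ k - a\<bar> \<le> 1 / 2 ^ k"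
proof -
  have p: "(2::real) ^ k > 0" by simp
  have "real_of_int \<lfloor>2 ^ k * a\<rfloor> \<le> 2 ^ k * a" "2 ^ k * a < real_of_int \<lfloor>2 ^ k * a\<rfloor> + 1"
    by linarith+
  hence "real_of_int \<lfloor>2 ^ k * a\<rfloor> / 2 ^ k \<le> a" "a < (real_of_int \<lfloor>2 ^ k * a\<rfloor> + 1) / 2 ^ k"
    using p by (simp_all add: field_simps)
  moreover have "(real_of_int \<lfloor>2 ^ k * a\<rfloor> + 1) / 2 ^ k = real_of_int \<lfloor>2 ^ k * a\<rfloor> / 2 ^ k + 1 / 2 ^ k"
    by (simp add: add_divide_distrib)
  ultimately show ?thesis by linarith
qed

lemma complex_round_err:
  "norm (Complex (of_int \<lfloor>2 ^ k * Re z\<rfloor>) (of_int \<lfloor>2 ^ k * Im z\<rfloor>) / 2 ^ k - z) \<le> 2 / 2 ^ k"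
proof -
  let ?w = "Complex (of_int \<lfloor>2 ^ k * Re z\<rfloor>) (of_int \<lfloor>2 ^ k * Im z\<rfloor>) / 2 ^ k - z"
  have re: "Re ?w = real_of_int \<lfloor>2 ^ k * Re z\<rfloor> / 2 ^ k - Re z"
    by (simp add: Re_divide_numeral)
  have im: "Im ?w = real_of_int \<lfloor>2 ^ k * Im z\<rfloor> / 2 ^ k - Im z"
    by (simp add: Im_divide_numeral)
  have "norm ?w \<le> \<bar>Re ?w\<bar> + \<bar>Im ?w\<bar>" by (rule cmod_le)
  also have "\<dots> \<le> 1 / 2 ^ k + 1 / 2 ^ k" unfolding re im by (intro add_mono round_err)
  finally show ?thesis by simp
qed

context shiftctx begin

definition Alg :: "(nat \<Rightarrow> complex) set" where
  "Alg = {f. \<exists>P. coeff P 0 = 0 \<and> f = (\<lambda>q. poly P (xv q))}"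

lemma Alg_l1: "f \<in> Alg \<Longrightarrow> f \<in> l1"
proof -
  assume "f \<in> Alg"
  then obtain P where P: "coeff P 0 = 0" "f = (\<lambda>q. poly P (xv q))" by (auto simp: Alg_def)
  show ?thesis
  proof (cases "P = 0")
    case True then show ?thesis using P by (simp add: l1_def)
  next
    case False
    have b: "norm (norm (f q)) \<le> pC P * (1 / ((real q + 1) * (real q + 2)))" for q
    proof -
      have "norm (f q) \<le> pC P * norm (xv q)" using poly_xv_bound[OF P(1) False] P(2) by simp
      also have "\<dots> \<le> pC P * (1 / ((real q + 1) * (real q + 2)))"
        using xv_bound pC_nonneg by (intro mult_left_mono) auto
      finally show ?thesis by simp
    qed
    have "summable (\<lambda>q. pC P * (1 / ((real q + 1) * (real q + 2))))"
      by (intro summable_mult summable_inv_quad)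
    hence "summable (\<lambda>q. norm (f q))" by (rule summable_comparison_test[rotated]) (use b in auto)
    thus ?thesis by (simp add: l1_def)
  qed
qed

lemma l1_shift: "f \<in> l1 \<Longrightarrow> (\<lambda>k. c * f (n + k)) \<in> l1"
proof -
  assume "f \<in> l1"
  hence "summable (\<lambda>k. norm (f k))" by (simp add: l1_def)
  hence "summable (\<lambda>k. norm (f (k + n)))" using summable_iff_shift[of "\<lambda>k. norm (f k)" n] by simp
  hence "summable (\<lambda>k. norm c * norm (f (n + k)))" by (intro summable_mult) (simp add: add.commute)
  thus ?thesis by (simp add: l1_def norm_mult)
qed

lemma hyp_main:
  assumes l1S: "\<forall>y\<in>l1. y \<in> S" and ap: "approx_prop S N"
    and P: "P \<noteq> 0" and c0: "coeff P 0 = 0"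
    and U: "open_in_space S N U" "U \<noteq> {}"
  shows "lower_log_density {n. ((\<lambda>x n. lam * backward_shift x n) ^^ n) (\<lambda>q. poly P (xv q)) \<in> U} > 0
       \<and> upper_density {n. ((\<lambda>x n. lam * backward_shift x n) ^^ n) (\<lambda>q. poly P (xv q)) \<in> U} > 0"
proof -
  let ?T = "\<lambda>x n. lam * backward_shift x n"
  let ?f = "\<lambda>q. poly P (xv q)"
  let ?r = "norm lam"
  have r1: "?r > 1" using lam .
  obtain x0 where x0: "x0 \<in> U" using U(2) by blast
  have US: "U \<subseteq> S" using U(1) by (simp add: open_in_space_def)
  have "\<exists>e>0. \<forall>y\<in>S. N (\<lambda>n. y n - x0 n) < e \<longrightarrow> y \<in> U"
    using U(1) x0 unfolding open_in_space_def by blast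
  then obtain e where e: "e > 0" "\<forall>y\<in>S. N (\<lambda>n. y n - x0 n) < e \<longrightarrow> y \<in> U"
    by blast
  have x0S: "x0 \<in> S" using x0 US by blast
  have exL: "\<exists>L. \<exists>\<epsilon>>0. \<epsilon> \<le> 1 \<and>
     (\<forall>u y. (\<forall>k<L. norm (u k - x0 k) \<le> \<epsilon>) \<and> (\<forall>k\<ge>L. u k = 0) \<and>
        summable (\<lambda>k. norm (y k)) \<and> (\<Sum>k. norm (y k)) \<le> \<epsilon> \<longrightarrow>
        N (\<lambda>k. (u k + y k) - x0 k) < e)"
    using ap x0S e(1) unfolding approx_prop_def by (elim ballE allE impE) auto
  then obtain L where "\<exists>\<epsilon>>0. \<epsilon> \<le> 1 \<and>
     (\<forall>u y. (\<forall>k<L. norm (u k - x0 k) \<le> \<epsilon>) \<and> (\<forall>k\<ge>L. u k = 0) \<and>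
        summable (\<lambda>k. norm (y k)) \<and> (\<Sum>k. norm (y k)) \<le> \<epsilon> \<longrightarrow>
        N (\<lambda>k. (u k + y k) - x0 k) < e)" ..
  then obtain \<epsilon> where "\<epsilon> > 0 \<and> \<epsilon> \<le> 1 \<and>
     (\<forall>u y. (\<forall>k<L. norm (u k - x0 k) \<le> \<epsilon>) \<and> (\<forall>k\<ge>L. u k = 0) \<and>
        summable (\<lambda>k. norm (y k)) \<and> (\<Sum>k. norm (y k)) \<le> \<epsilon> \<longrightarrow>
        N (\<lambda>k. (u k + y k) - x0 k) < e)" ..
  note Lc = this
  have L1: "\<epsilon> > 0" using Lc by (rule conjunct1)
  have L2: "\<epsilon> \<le> 1" using Lc by (rule conjunct1[OF conjunct2])
  have L3: "\<forall>u y. (\<forall>k<L. norm (u k - x0 k) \<le> \<epsilon>) \<and> (\<forall>k\<ge>L. u k = 0) \<and>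
        summable (\<lambda>k. norm (y k)) \<and> (\<Sum>k. norm (y k)) \<le> \<epsilon> \<longrightarrow>
        N (\<lambda>k. (u k + y k) - x0 k) < e" using Lc by (rule conjunct2[OF conjunct2])
  note L = L1 L2 L3
  define d where "d = pord P"
  define ad where "ad = coeff P d"
  define C where "C = pC P"
  have dpos: "d > 0" using pord_pos[OF P c0] by (simp add: d_def)
  have ad0: "ad \<noteq> 0" using pord_coeff[OF P] by (simp add: ad_def d_def)
  have C0: "C \<ge> 0" using pC_nonneg by (simp add: C_def)
  define B where "B = max (2 * C * (?r / (?r - 1)) / \<epsilon>) (2 * norm ad / \<epsilon>)"
  obtain \<kappa> where \<kappa>: "B \<le> 2 ^ \<kappa>" using exp_large[of 2 B] by auto
  have k1: "C * (?r / (?r - 1) / 2 ^ \<kappa>) \<le> \<epsilon> / 2"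
  proof -
    define X where "X = C * (?r / (?r - 1))"
    have "2 * X / \<epsilon> \<le> 2 ^ \<kappa>" using \<kappa> by (simp add: B_def X_def mult.assoc)
    hence "2 * X \<le> 2 ^ \<kappa> * \<epsilon>" using L(1) by (simp add: pos_divide_le_eq)
    hence "X / 2 ^ \<kappa> \<le> \<epsilon> / 2" by (simp add: field_simps)
    thus ?thesis by (simp add: X_def)
  qed
  have k2: "norm ad * (2 / 2 ^ \<kappa>) \<le> \<epsilon>"
  proof -
    have "2 * norm ad / \<epsilon> \<le> 2 ^ \<kappa>" using \<kappa> by (simp add: B_def)
    hence "2 * norm ad \<le> 2 ^ \<kappa> * \<epsilon>" using L(1) by (simp add: pos_divide_le_eq)
    thus ?thesis by (simp add: field_simps)
  qed
  define ws where "ws = map (\<lambda>m. (\<lfloor>2 ^ \<kappa> * Re (x0 m / ad)\<rfloor>, \<lfloor>2 ^ \<kappa> * Im (x0 m / ad)\<rfloor>)) [0..<L]"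
  define t where "t = (ws, \<kappa>)"
  have tL: "tL t = L" by (simp add: tL_def t_def ws_def)
  define u where "u m = ad * tv t m" for m
  have u_head: "norm (u m - x0 m) \<le> \<epsilon>" if "m < L" for m
  proof -
    have tv: "tv t m = Complex (of_int \<lfloor>2 ^ \<kappa> * Re (x0 m / ad)\<rfloor>) (of_int \<lfloor>2 ^ \<kappa> * Im (x0 m / ad)\<rfloor>) / 2 ^ \<kappa>"
    proof -
      have "m < tL t" using that tL by simp
      thus ?thesis unfolding tv_def by (simp add: t_def ws_def that)
    qed
    have "u m - x0 m = ad * (tv t m - x0 m / ad)" using ad0 by (simp add: u_def field_simps)
    hence "norm (u m - x0 m) = norm ad * norm (tv t m - x0 m / ad)" by (simp add: norm_mult)
    also have "\<dots> \<le> norm ad * (2 / 2 ^ \<kappa>)"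
      unfolding tv by (intro mult_left_mono complex_round_err) auto
    finally show ?thesis using k2 by linarith
  qed
  have u_tail: "u m = 0" if "L \<le> m" for m using that tv_zero[of t m] tL by (simp add: u_def)
  define a where "a = d - 1"
  have da: "Suc a = d" using dpos by (simp add: a_def)
  define W where "W = tW t"
  obtain S1 where S1: "\<forall>s\<ge>S1. good a t s" using good_eventually by blast
  obtain S2 where S2: "\<forall>s\<ge>S2. 2 * C * (real L * W + 1) / \<epsilon> \<le> ?r ^ s" using exp_large[OF r1] by blast
  define e1 where "e1 = max S1 S2"
  have H: "\<forall>e'\<ge>e1. ea e' = a \<and> etg e' = t \<longrightarrow> active e'"
  proof (intro allI impI)
    fix e' assume h: "e1 \<le> e'" "ea e' = a \<and> etg e' = t"
    have "S1 \<le> sq e'" using h(1) sq_ge[of e'] by (simp add: e1_def)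
    hence "good a t (sq e')" using S1 by blast
    thus "active e'" using h(2) by (simp add: active_def)
  qed
  have Hsmall: "C * (real L * W / ?r ^ (3 * sq e') + 1 / ?r ^ sq (Suc e')) \<le> \<epsilon> / 2" if "e1 \<le> e'" for e'
  proof -
    have "S2 \<le> sq e'" using that sq_ge[of e'] by (simp add: e1_def)
    hence "2 * C * (real L * W + 1) / \<epsilon> \<le> ?r ^ sq e'" using S2 by blast
    hence "2 * (C * (real L * W + 1)) \<le> ?r ^ sq e' * \<epsilon>" using L(1) by (simp add: pos_divide_le_eq mult.assoc)
    moreover have "?r ^ sq e' > 0" using r1 by (intro zero_less_power) linarith
    ultimately have a1: "C * (real L * W + 1) / ?r ^ sq e' \<le> \<epsilon> / 2" by (simp add: pos_divide_le_eq field_simps)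
    have W1: "W \<ge> 1" using tW_ge1 by (simp add: W_def)
    have "real L * W / ?r ^ (3 * sq e') \<le> real L * W / ?r ^ sq e'"
      using r1 W1 by (intro div_pow_mono) auto
    moreover have "1 / ?r ^ sq (Suc e') \<le> 1 / ?r ^ sq e'"
      using r1 sq_less_Suc[of e'] by (intro inv_pow_mono) auto
    ultimately have "real L * W / ?r ^ (3 * sq e') + 1 / ?r ^ sq (Suc e') \<le> (real L * W + 1) / ?r ^ sq e'"
      by (simp add: add_divide_distrib)
    hence "C * (real L * W / ?r ^ (3 * sq e') + 1 / ?r ^ sq (Suc e')) \<le> C * ((real L * W + 1) / ?r ^ sq e')"
      using C0 by (intro mult_left_mono) auto
    moreover have "C * ((real L * W + 1) / ?r ^ sq e') = C * (real L * W + 1) / ?r ^ sq e'" by simp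
    ultimately show ?thesis using a1 by linarith
  qed
  have fl1: "?f \<in> l1" using Alg_l1 c0 by (auto simp: Alg_def)
  have RA: "Rset a t e1 \<subseteq> {n. (?T ^^ n) ?f \<in> U}"
  proof
    fix n assume "n \<in> Rset a t e1"
    then obtain e' i where ei: "e1 \<le> e'" "ea e' = a" "etg e' = t" "i < ecnt e'" "n = eb e' + eK e' * i"
      unfolding Rset_def by blast
    have act: "active e'" using H ei by blast
    have deg: "ed e' = pord P" using ei(2) da by (simp add: ed_def d_def)
    define y where "y k = lam ^ n * poly P (xv (n + k)) - u k" for k
    have est: "(\<Sum>k<M. norm (y k)) \<le> \<epsilon>" for M
    proof -
      have "(\<Sum>k<M. norm (y k)) = (\<Sum>k<M. norm (lam ^ n * poly P (xv (n + k)) - coeff P (pord P) * ev e' k))"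
        by (simp add: y_def u_def ad_def d_def ev_def ei(3))
      also have "\<dots> \<le> pC P * (real (eL e') * eW e' / ?r ^ (3 * sq e') + ?r / (?r - 1) / 2 ^ eacc e' + 1 / ?r ^ sq (Suc e'))"
        by (rule main_est[OF P c0 act deg ei(4,5)])
      also have "\<dots> = C * (real L * W / ?r ^ (3 * sq e') + 1 / ?r ^ sq (Suc e')) + C * (?r / (?r - 1) / 2 ^ \<kappa>)"
      proof -
        have "snd t = \<kappa>" by (simp add: t_def)
        thus ?thesis by (simp add: C_def eL_def eW_def eacc_def ei(3) tL W_def algebra_simps)
      qed
      also have "\<dots> \<le> \<epsilon> / 2 + \<epsilon> / 2" using Hsmall[OF ei(1)] k1 by (rule add_mono)
      finally show ?thesis by simp
    qed
    have sy: "summable (\<lambda>k. norm (y k))" by (rule summableI_nonneg_bounded[of _ \<epsilon>]) (use est in auto)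
    have sy_le: "(\<Sum>k. norm (y k)) \<le> \<epsilon>" by (rule suminf_le_const[OF sy est])
    have Tn: "(?T ^^ n) ?f = (\<lambda>k. u k + y k)" by (simp add: T_iter y_def)
    have "N (\<lambda>k. (u k + y k) - x0 k) < e"
      by (rule L(3)[rule_format, of u y]) (use u_head u_tail sy sy_le in blast)
    moreover have "(?T ^^ n) ?f \<in> S"
    proof -
      have "(\<lambda>k. lam ^ n * ?f (n + k)) \<in> l1" by (rule l1_shift[OF fl1])
      thus ?thesis using l1S by (simp add: T_iter)
    qed
    ultimately have "(?T ^^ n) ?f \<in> U" using e(2) Tn by simp
    thus "n \<in> {n. (?T ^^ n) ?f \<in> U}" by simp
  qed
  show ?thesis by (rule density_main[OF H RA])
qed

end

context shiftctx begin

lemma Alg_sub: "is_subalgebra S Alg" if l1S: "\<forall>y\<in>l1. y \<in> S"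
  unfolding is_subalgebra_def
proof (intro conjI ballI allI)
  show "Alg \<subseteq> S" using Alg_l1 l1S by blast
  show "(\<lambda>n. 0) \<in> Alg" unfolding Alg_def by (rule CollectI, rule exI[of _ 0]) simp
  fix f g assume f: "f \<in> Alg" and g: "g \<in> Alg"
  obtain P where P: "coeff P 0 = 0" "f = (\<lambda>q. poly P (xv q))" using f by (auto simp: Alg_def)
  obtain Q where Q: "coeff Q 0 = 0" "g = (\<lambda>q. poly Q (xv q))" using g by (auto simp: Alg_def)
  show "(\<lambda>n. f n + g n) \<in> Alg" unfolding Alg_def
    by (rule CollectI, rule exI[of _ "P + Q"]) (simp add: P Q)
  show "(\<lambda>n. f n * g n) \<in> Alg" unfolding Alg_def
    by (rule CollectI, rule exI[of _ "P * Q"]) (simp add: P Q coeff_mult_0)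
next
  fix c :: complex and f assume f: "f \<in> Alg"
  obtain P where P: "coeff P 0 = 0" "f = (\<lambda>q. poly P (xv q))" using f by (auto simp: Alg_def)
  show "(\<lambda>n. c * f n) \<in> Alg" unfolding Alg_def
    by (rule CollectI, rule exI[of _ "smult c P"]) (simp add: P)
qed

lemma xv_nonzero_exists: "xv \<noteq> (\<lambda>n. 0)"
proof -
  define t0 :: tgt where "t0 = ([(1, 0)], 0)"
  obtain S0 where S0: "\<forall>s\<ge>S0. good 0 t0 s" using good_eventually by blast
  define e where "e = cls 0 t0 S0"
  have cp: "ea e = 0" "etg e = t0" using cls_props[of 0 t0 S0] by (auto simp: e_def)
  have "S0 \<le> sq e" using cls_ge[of S0 0 t0] sq_ge[of e] by (simp add: e_def)
  hence act: "active e" using S0 cp by (simp add: active_def)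
  have L1: "eL e = 1" using cp by (simp add: eL_def tL_def t0_def)
  have cnt: "0 < ecnt e"
  proof -
    have g: "2 * eK e \<le> sq e" using act by (simp add: active_def good_def eK_def)
    have K0: "eK e > 0" by (rule eK_pos)
    have "sq e \<le> ed e * sq e" using ed_pos[of e] by simp
    hence "eK e \<le> ed e * sq e" using g by linarith
    thus ?thesis using K0 by (simp add: ecnt_def div_greater_zero_iff)
  qed
  have v: "ev e 0 = 1" using cp by (simp add: ev_def tv_def tL_def t0_def complex_eq_iff)
  have "xv (eb e + eK e * 0 + 0) = croot (ed e) (ev e 0 / lam ^ (eb e + eK e * 0))"
    by (rule xv_block[OF act cnt]) (simp add: L1)
  moreover have "lam \<noteq> 0" by (rule ccontr) (use lam in simp)
  ultimately have "xv (eb e) \<noteq> 0" using v by (simp add: croot_nonzero)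
  show ?thesis
  proof
    assume "xv = (\<lambda>n. 0)"
    hence "xv (eb e) = 0" by simp
    thus False using \<open>xv (eb e) \<noteq> 0\<close> by simp
  qed
qed

lemma main_generic:
  assumes l1S: "\<forall>y\<in>l1. y \<in> S" and ap: "approx_prop S N"
  shows "admits_algebra A_log S N (\<lambda>x n. lam * backward_shift x n)
       \<and> admits_algebra A_ud S N (\<lambda>x n. lam * backward_shift x n)"
proof -
  have sub: "is_subalgebra S Alg" by (rule Alg_sub[OF l1S])
  have xA: "xv \<in> Alg" unfolding Alg_def by (rule CollectI, rule exI[of _ "[:0, 1:]"]) simp
  have ne: "Alg \<noteq> {\<lambda>n. 0}" using xA xv_nonzero_exists by blast
  have hc: "A_hypercyclic A_log S N (\<lambda>x n. lam * backward_shift x n) f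
          \<and> A_hypercyclic A_ud S N (\<lambda>x n. lam * backward_shift x n) f" if f: "f \<in> Alg - {\<lambda>n. 0}" for f
  proof -
    obtain P where P: "coeff P 0 = 0" "f = (\<lambda>q. poly P (xv q))" using f by (auto simp: Alg_def)
    have P0: "P \<noteq> 0" using f P by auto
    have fS: "f \<in> S" using sub f by (auto simp: is_subalgebra_def)
    have "\<forall>U. open_in_space S N U \<and> U \<noteq> {} \<longrightarrow>
        lower_log_density {n. ((\<lambda>x n. lam * backward_shift x n) ^^ n) f \<in> U} > 0
       \<and> upper_density {n. ((\<lambda>x n. lam * backward_shift x n) ^^ n) f \<in> U} > 0"
    proof (intro allI impI)
      fix U assume U: "open_in_space S N U \<and> U \<noteq> {}"
      show "lower_log_density {n. ((\<lambda>x n. lam * backward_shift x n) ^^ n) f \<in> U} > 0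
       \<and> upper_density {n. ((\<lambda>x n. lam * backward_shift x n) ^^ n) f \<in> U} > 0"
        unfolding P(2) using hyp_main[OF l1S ap P0 P(1), of U] U by blast
    qed
    thus ?thesis using fS by (auto simp: A_hypercyclic_def A_log_def A_ud_def)
  qed
  have "admits_algebra A_log S N (\<lambda>x n. lam * backward_shift x n)"
    unfolding admits_algebra_def by (rule exI[of _ Alg]) (use sub ne hc in blast)
  moreover have "admits_algebra A_ud S N (\<lambda>x n. lam * backward_shift x n)"
    unfolding admits_algebra_def by (rule exI[of _ Alg]) (use sub ne hc in blast)
  ultimately show ?thesis by blast
qed

end

theorem corollary2p5:
  fixes lam :: complex
  assumes "norm lam > 1"
  shows "(\<forall>p::real. 1 \<le> p \<longrightarrow>
            admits_algebra A_log (lp_space p) (lp_norm p) (\<lambda>x n. lam * backward_shift x n) \<and>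
            admits_algebra A_ud (lp_space p) (lp_norm p) (\<lambda>x n. lam * backward_shift x n))
       \<and> admits_algebra A_log c0_space c0_norm (\<lambda>x n. lam * backward_shift x n)
       \<and> admits_algebra A_ud c0_space c0_norm (\<lambda>x n. lam * backward_shift x n)"
proof -
  interpret shiftctx lam by unfold_locales (rule assms)
  have lp: "admits_algebra A_log (lp_space p) (lp_norm p) (\<lambda>x n. lam * backward_shift x n) \<and>
            admits_algebra A_ud (lp_space p) (lp_norm p) (\<lambda>x n. lam * backward_shift x n)"
    if p: "1 \<le> p" for p :: real
    using main_generic[of "lp_space p" "lp_norm p"] l1_lp[OF p] approx_lp[OF p] by blast
  have c0: "admits_algebra A_log c0_space c0_norm (\<lambda>x n. lam * backward_shift x n)
       \<and> admits_algebra A_ud c0_space c0_norm (\<lambda>x n. lam * backward_shift x n)"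
    using main_generic[of c0_space c0_norm] l1_c0 approx_c0 by blast
  show ?thesis using lp c0 by blast
qed


end
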